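(* Let $a<b$ and let $X=(X_1,\dots,X_n)$ have coordinates taking values in finite subsets of $[a,b]$ and satisfy a $\mathfrak{d}$-LSI$(\sigma^2)$. Let $(\mathcal{B},\|\cdot\|)$ be a Banach space with dual unit ball $\mathcal{B}_1^*$, $\mathcal{T}$ a compact set of families $t=(t_{ij})_{1\le i<j\le n}$ in $\mathcal{B}$ (extended by $t_{ji}=t_{ij}$, $t_{ii}=0$), and $f_{\mathcal{T}}(X)=\sup_{t\in\mathcal{T}}\|\sum_{i<j}X_iX_jt_{ij}\|$. Put $T_1=\mathbb{E}\sup_{t\in\mathcal{T}}\sup_{v^*\in\mathcal{B}_1^*}\big(\sum_{i=1}^n(\sum_{j=1}^nX_jv^*(t_{ij}))^2\big)^{1/2}$ and $T_2=\sup_{t\in\mathcal{T}}\sup_{v^*\in\mathcal{B}_1^*}|(v^*(t_{ij}))_{i,j}|_{\mathrm{op}}$. Then for all $t\ge0$, \[ \mathbb{P}\big(f_{\mathcal{T}}(X)-\mathbb{E}f_{\mathcal{T}}(X)\ge t\big)\le2\exp\Big(-\frac{1}{60(b-a)^2\sigma^2}\min\Big(\frac{t^2}{T_1^2},\frac{t}{T_2}\Big)\Big). \]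
   Context: $\mathfrak{d}$-LSI$(\sigma^2)$: with $\mu$ the law of $X$, $\mathfrak{d}_iF(x)^2=\mathrm{Var}_{\mu(\cdot\mid x_{i^c})}(F(x_{i^c},\cdot))$ (variance under the conditional law of $X_i$ given the other coordinates), $|\mathfrak{d}F|^2=\sum_i\mathfrak{d}_iF^2$, and $\mathrm{Ent}_\mu(F^2)\le2\sigma^2\int|\mathfrak{d}F|^2d\mu$ for all $F$, where $\mathrm{Ent}_\mu(h)=\int h\log h\,d\mu-\int h\,d\mu\log\int h\,d\mu$. $|M|_{\mathrm{op}}$ is the operator norm of a real matrix. *)

theory Defs
  imports "HOL-Analysis.Analysis" "HOL-Probability.Probability"
begin

text \<open>Conditional variance of F in coordinate i, given the other coordinates of x
  (i.e. the square of the discrete gradient component).\<close>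
definition d_sq :: "(real^'n::finite) pmf \<Rightarrow> (real^'n \<Rightarrow> real) \<Rightarrow> 'n \<Rightarrow> real^'n \<Rightarrow> real" where
  "d_sq \<mu> F i x = measure_pmf.variance (cond_pmf \<mu> {y. \<forall>j. j \<noteq> i \<longrightarrow> y $ j = x $ j}) F"

definition grad_sq :: "(real^'n::finite) pmf \<Rightarrow> (real^'n \<Rightarrow> real) \<Rightarrow> real^'n \<Rightarrow> real" where
  "grad_sq \<mu> F x = (\<Sum>i\<in>UNIV. d_sq \<mu> F i x)"

definition xlogx :: "real \<Rightarrow> real" where
  "xlogx x = (if x = 0 then 0 else x * ln x)"

definition ent :: "'a pmf \<Rightarrow> ('a \<Rightarrow> real) \<Rightarrow> real" where
  "ent \<mu> h = measure_pmf.expectation \<mu> (\<lambda>x. xlogx (h x)) - xlogx (measure_pmf.expectation \<mu> h)"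

definition d_LSI :: "(real^'n::finite) pmf \<Rightarrow> real \<Rightarrow> bool" where
  "d_LSI \<mu> \<sigma> \<longleftrightarrow> (\<forall>F. ent \<mu> (\<lambda>x. (F x)\<^sup>2) \<le> 2 * \<sigma>\<^sup>2 * measure_pmf.expectation \<mu> (grad_sq \<mu> F))"

definition ext_fam :: "('n::linorder \<Rightarrow> 'n \<Rightarrow> 'b::real_vector) \<Rightarrow> 'n \<Rightarrow> 'n \<Rightarrow> 'b" where
  "ext_fam t i j = (if i < j then t i j else if j < i then t j i else 0)"

definition dual_ball :: "('b::real_normed_vector \<Rightarrow>\<^sub>L real) set" where
  "dual_ball = {v. norm v \<le> 1}"

definition fT :: "('n::{finite,linorder} \<Rightarrow> 'n \<Rightarrow> 'b::real_normed_vector) set \<Rightarrow> ((real, 'n) vec) \<Rightarrow> real" where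
  "fT \<T> x = (SUP t\<in>\<T>. norm (\<Sum>(i,j)\<in>{(i,j). i < j}. (x $ i * x $ j) *\<^sub>R t i j))"

definition T1 :: "((real, 'n::{finite,linorder}) vec) pmf \<Rightarrow> ('n \<Rightarrow> 'n \<Rightarrow> 'b::real_normed_vector) set \<Rightarrow> real" where
  "T1 \<mu> \<T> = measure_pmf.expectation \<mu> (\<lambda>x. SUP t\<in>\<T>. SUP v\<in>dual_ball.
      sqrt (\<Sum>i\<in>UNIV. (\<Sum>j\<in>UNIV. x $ j * blinfun_apply v (ext_fam t i j))\<^sup>2))"

definition T2 :: "('n::{finite,linorder} \<Rightarrow> 'n \<Rightarrow> 'b::real_normed_vector) set \<Rightarrow> real" where
  "T2 \<T> = (SUP t\<in>\<T>. SUP v\<in>dual_ball.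
      onorm (\<lambda>y::(real, 'n) vec. (\<chi> i j. blinfun_apply v (ext_fam t i j)) *v y))"

end

theory Submission
  imports Defs
begin

definition pgraph :: "'b::real_normed_vector \<Rightarrow> ('b \<times> real) set \<Rightarrow> bool" where
  "pgraph u G \<longleftrightarrow> (0,0) \<in> G \<and> (\<forall>p\<in>G. \<forall>q\<in>G. p + q \<in> G) \<and> (\<forall>p\<in>G. \<forall>c. c *\<^sub>R p \<in> G)
     \<and> (\<forall>a. (0,a) \<in> G \<longrightarrow> a = 0) \<and> (\<forall>x a. (x,a) \<in> G \<longrightarrow> a \<le> norm x) \<and> (u, norm u) \<in> G"

lemma pg0: "pgraph u G \<Longrightarrow> (0,0) \<in> G" unfolding pgraph_def by simp
lemma pg_add: "pgraph u G \<Longrightarrow> p \<in> G \<Longrightarrow> q \<in> G \<Longrightarrow> p + q \<in> G" unfolding pgraph_def by simp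
lemma pg_scale: "pgraph u G \<Longrightarrow> p \<in> G \<Longrightarrow> c *\<^sub>R p \<in> G" unfolding pgraph_def by simp
lemma pg_zero: "pgraph u G \<Longrightarrow> (0,a) \<in> G \<Longrightarrow> a = 0" unfolding pgraph_def by simp
lemma pg_dom: "pgraph u G \<Longrightarrow> (x,a) \<in> G \<Longrightarrow> a \<le> norm x" unfolding pgraph_def by simp
lemma pg_u: "pgraph u G \<Longrightarrow> (u, norm u) \<in> G" unfolding pgraph_def by simp

lemma pgraph_fun:
  assumes "pgraph u G" "(x,a) \<in> G" "(x,b) \<in> G" shows "a = b"
proof -
  have "(x,a) + (-1) *\<^sub>R (x,b) \<in> G" using assms by (intro pg_add pg_scale)
  hence "(0, a - b) \<in> G" by simp
  thus ?thesis using pg_zero[OF assms(1)] by fastforce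
qed

lemma pgraph_init: "pgraph u {(s *\<^sub>R u, s * norm u) | s. True}"
  unfolding pgraph_def
proof (intro conjI allI impI ballI)
  show "(0,0) \<in> {(s *\<^sub>R u, s * norm u) | s. True}" by (rule CollectI, rule exI[of _ 0]) simp
  show "(u, norm u) \<in> {(s *\<^sub>R u, s * norm u) | s. True}" by (rule CollectI, rule exI[of _ 1]) simp
next
  fix p q assume "p \<in> {(s *\<^sub>R u, s * norm u) | s. True}" "q \<in> {(s *\<^sub>R u, s * norm u) | s. True}"
  then obtain s r where "p = (s *\<^sub>R u, s * norm u)" "q = (r *\<^sub>R u, r * norm u)" by blast
  thus "p + q \<in> {(s *\<^sub>R u, s * norm u) | s. True}"
    by (intro CollectI exI[of _ "s+r"]) (simp add: scaleR_add_left distrib_right)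
next
  fix p c assume "p \<in> {(s *\<^sub>R u, s * norm u) | s. True}"
  then obtain s where "p = (s *\<^sub>R u, s * norm u)" by blast
  thus "c *\<^sub>R p \<in> {(s *\<^sub>R u, s * norm u) | s. True}"
    by (intro CollectI exI[of _ "c * s"]) simp
next
  fix a assume "(0,a) \<in> {(s *\<^sub>R u, s * norm u) | s. True}"
  then obtain s where "0 = s *\<^sub>R u" "a = s * norm u" by blast
  thus "a = 0" by auto
next
  fix x a assume "(x,a) \<in> {(s *\<^sub>R u, s * norm u) | s. True}"
  then obtain s where "x = s *\<^sub>R u" "a = s * norm u" by blast
  thus "a \<le> norm x" by (simp add: mult_right_mono)
qed

lemma pgraph_union:
  assumes "C \<noteq> {}" "\<forall>G\<in>C. pgraph u G" "\<forall>G\<in>C. \<forall>H\<in>C. G \<subseteq> H \<or> H \<subseteq> G"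
  shows "pgraph u (\<Union>C)"
proof -
  obtain G0 where G0: "G0 \<in> C" using assms(1) by blast
  show ?thesis unfolding pgraph_def
  proof (intro conjI allI impI ballI)
    show "(0,0) \<in> \<Union>C" using G0 assms(2) pg0 by blast
    show "(u, norm u) \<in> \<Union>C" using G0 assms(2) pg_u by blast
  next
    fix p q assume "p \<in> \<Union>C" "q \<in> \<Union>C"
    then obtain G H where GH: "G \<in> C" "H \<in> C" "p \<in> G" "q \<in> H" by blast
    show "p + q \<in> \<Union>C"
    proof (cases "G \<subseteq> H")
      case True thus ?thesis using GH assms(2) pg_add by blast
    next
      case False hence "H \<subseteq> G" using assms(3) GH by blast
      thus ?thesis using GH assms(2) pg_add by blast
    qed
  next
    fix p c assume "p \<in> \<Union>C"
    thus "c *\<^sub>R p \<in> \<Union>C" using assms(2) pg_scale by blast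
  next
    fix a assume "(0,a) \<in> \<Union>C"
    thus "a = 0" using assms(2) pg_zero by blast
  next
    fix x a assume "(x,a) \<in> \<Union>C"
    thus "a \<le> norm x" using assms(2) pg_dom by blast
  qed
qed

lemma pgraph_extend:
  fixes y0 :: "'b::real_normed_vector"
  assumes M: "pgraph u M" and y0: "\<forall>a. (y0,a) \<notin> M"
  shows "\<exists>M'. pgraph u M' \<and> M \<subseteq> M' \<and> M' \<noteq> M"
proof -
  define L where "L = {a - norm (x - y0) | x a. (x,a) \<in> M}"
  have ub: "l \<le> norm (x' + y0) - a'" if "l \<in> L" "(x',a') \<in> M" for l x' a'
  proof -
    obtain x a where xa: "(x,a) \<in> M" "l = a - norm (x - y0)" using \<open>l \<in> L\<close> unfolding L_def by blast
    have "(x,a) + (x',a') \<in> M" using M xa that by (intro pg_add)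
    hence "a + a' \<le> norm (x + x')" using M pg_dom by fastforce
    also have "x + x' = (x - y0) + (x' + y0)" by simp
    also have "norm \<dots> \<le> norm (x - y0) + norm (x' + y0)" by (rule norm_triangle_ineq)
    finally show ?thesis using xa by simp
  qed
  have Lne: "L \<noteq> {}" using pg0[OF M] unfolding L_def by blast
  have Lbdd: "bdd_above L"
    using ub[of _ 0 0] M unfolding pgraph_def bdd_above_def by blast
  define c where "c = Sup L"
  have c1: "a - norm (x - y0) \<le> c" if "(x,a) \<in> M" for x a
    unfolding c_def using that Lbdd by (intro cSup_upper) (auto simp: L_def)
  have c2: "c \<le> norm (x + y0) - a" if "(x,a) \<in> M" for x a
    unfolding c_def using that Lne ub by (intro cSup_least) auto
  define M' where "M' = {(x + s *\<^sub>R y0, a + s * c) | x a s. (x,a) \<in> M}"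
  have sub: "M \<subseteq> M'"
  proof
    fix p assume "p \<in> M"
    then obtain x a where "p = (x,a)" "(x,a) \<in> M" by (cases p) auto
    thus "p \<in> M'" unfolding M'_def by (intro CollectI exI[of _ x] exI[of _ a] exI[of _ 0]) simp
  qed
  have new: "(y0, c) \<in> M'"
    using pg0[OF M] unfolding M'_def by (intro CollectI exI[of _ 0] exI[of _ 0] exI[of _ 1]) simp
  have "pgraph u M'" unfolding pgraph_def
  proof (intro conjI allI impI ballI)
    show "(0,0) \<in> M'" using sub pg0[OF M] by blast
    show "(u, norm u) \<in> M'" using sub pg_u[OF M] by blast
  next
    fix p q assume "p \<in> M'" "q \<in> M'"
    then obtain x a s x' a' s' where "p = (x + s *\<^sub>R y0, a + s * c)" "(x,a) \<in> M"
       "q = (x' + s' *\<^sub>R y0, a' + s' * c)" "(x',a') \<in> M" unfolding M'_def by blast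
    moreover have "(x,a) + (x',a') \<in> M" using M calculation by (intro pg_add)
    ultimately show "p + q \<in> M'" unfolding M'_def
      by (intro CollectI exI[of _ "x+x'"] exI[of _ "a+a'"] exI[of _ "s+s'"])
         (simp add: algebra_simps)
  next
    fix p r assume "p \<in> M'"
    then obtain x a s where "p = (x + s *\<^sub>R y0, a + s * c)" "(x,a) \<in> M" unfolding M'_def by blast
    moreover have "r *\<^sub>R (x,a) \<in> M" using M calculation by (intro pg_scale)
    ultimately show "r *\<^sub>R p \<in> M'" unfolding M'_def
      by (intro CollectI exI[of _ "r *\<^sub>R x"] exI[of _ "r * a"] exI[of _ "r * s"])
         (simp add: algebra_simps)
  next
    fix b assume "(0,b) \<in> M'"
    then obtain x a s where xa: "0 = x + s *\<^sub>R y0" "b = a + s * c" "(x,a) \<in> M" unfolding M'_def by blast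
    show "b = 0"
    proof (cases "s = 0")
      case True thus ?thesis using xa pg_zero[OF M] by auto
    next
      case False
      have "(-(1/s)) *\<^sub>R (x,a) \<in> M" using M xa by (intro pg_scale)
      moreover have "(-(1/s)) *\<^sub>R x = y0"
      proof -
        have "x = - (s *\<^sub>R y0)" using xa(1) by (simp add: eq_neg_iff_add_eq_0)
        thus ?thesis using False by simp
      qed
      ultimately have "(y0, -(1/s) * a) \<in> M" by simp
      thus ?thesis using y0 by blast
    qed
  next
    fix z b assume "(z,b) \<in> M'"
    then obtain x a s where xa: "z = x + s *\<^sub>R y0" "b = a + s * c" "(x,a) \<in> M" unfolding M'_def by blast
    show "b \<le> norm z"
    proof (cases "0::real" s rule: linorder_cases)
      case equal thus ?thesis using xa pg_dom[OF M] by auto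
    next
      case less
      have "(1/s) *\<^sub>R (x,a) \<in> M" using M xa by (intro pg_scale)
      hence h: "c \<le> norm ((1/s) *\<^sub>R x + y0) - (1/s) * a" using c2 by simp
      have eq: "s * norm ((1/s) *\<^sub>R x + y0) = norm (x + s *\<^sub>R y0)"
      proof -
        have "s * norm ((1/s) *\<^sub>R x + y0) = norm (s *\<^sub>R ((1/s) *\<^sub>R x + y0))" using less by simp
        also have "s *\<^sub>R ((1/s) *\<^sub>R x + y0) = x + s *\<^sub>R y0" using less by (simp add: scaleR_add_right)
        finally show ?thesis .
      qed
      have "s * c \<le> s * (norm ((1/s) *\<^sub>R x + y0) - (1/s) * a)" using h less by (simp add: mult_left_mono)
      also have "\<dots> = norm (x + s *\<^sub>R y0) - a" using eq less by (simp add: right_diff_distrib)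
      finally show ?thesis using xa by simp
    next
      case greater
      define r where "r = - s"
      have r: "r > 0" using greater r_def by simp
      have "(1/r) *\<^sub>R (x,a) \<in> M" using M xa by (intro pg_scale)
      hence "(1/r) * a - norm ((1/r) *\<^sub>R x - y0) \<le> c" using c1 by simp
      hence "r * ((1/r) * a - norm ((1/r) *\<^sub>R x - y0)) \<le> r * c" using r by (simp add: mult_left_mono)
      also have "r * ((1/r) * a - norm ((1/r) *\<^sub>R x - y0)) = a - norm (r *\<^sub>R ((1/r) *\<^sub>R x - y0))"
        using r by (simp add: right_diff_distrib)
      also have "r *\<^sub>R ((1/r) *\<^sub>R x - y0) = x + s *\<^sub>R y0" using r by (simp add: r_def scaleR_diff_right)
      finally show ?thesis using xa r_def by simp
    qed
  qed
  moreover have "M' \<noteq> M" using new y0 by blast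
  ultimately show ?thesis using sub by blast
qed

lemma hahn_banach_norming:
  fixes u :: "'b::real_normed_vector"
  shows "\<exists>\<phi>::'b \<Rightarrow>\<^sub>L real. norm \<phi> \<le> 1 \<and> blinfun_apply \<phi> u = norm u"
proof -
  define A where "A = {G. pgraph u G}"
  have "\<exists>M\<in>A. \<forall>X\<in>A. M \<subseteq> X \<longrightarrow> X = M"
  proof (rule subset_Zorn_nonempty)
    show "A \<noteq> {}" using pgraph_init unfolding A_def by blast
  next
    fix C assume "C \<noteq> {}" "subset.chain A C"
    thus "\<Union>C \<in> A" unfolding A_def using pgraph_union[of C u]
      by (auto simp: subset.chain_def)
  qed
  then obtain M where M: "pgraph u M" and max: "\<And>X. pgraph u X \<Longrightarrow> M \<subseteq> X \<Longrightarrow> X = M"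
    unfolding A_def by blast
  have tot: "\<exists>a. (y,a) \<in> M" for y
    using pgraph_extend[OF M, of y] max by blast
  define f where "f y = (THE a. (y,a) \<in> M)" for y
  have fM: "(y, f y) \<in> M" for y
    unfolding f_def using tot[of y] pgraph_fun[OF M] by (metis (no_types, lifting) theI)
  have fval: "(y,a) \<in> M \<Longrightarrow> f y = a" for y a using pgraph_fun[OF M] fM by blast
  have add: "f (x + y) = f x + f y" for x y
  proof -
    have "(x, f x) + (y, f y) \<in> M" using M fM by (intro pg_add)
    thus ?thesis using fval by simp
  qed
  have scale: "f (r *\<^sub>R x) = r * f x" for r x
  proof -
    have "r *\<^sub>R (x, f x) \<in> M" using M fM by (intro pg_scale)
    thus ?thesis using fval by simp
  qed
  have dom: "f y \<le> norm y" for y using pg_dom[OF M fM] .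
  have absb: "\<bar>f y\<bar> \<le> norm y" for y
  proof -
    have "- f y = f (-y)" using scale[of "-1" y] by simp
    also have "\<dots> \<le> norm y" using dom[of "-y"] by simp
    finally show ?thesis using dom[of y] by simp
  qed
  have bl: "bounded_linear f"
    by (rule bounded_linear_intro[where K=1]) (use add scale absb in auto)
  have fu: "f u = norm u" using fval pg_u[OF M] by blast
  show ?thesis
  proof (intro exI conjI)
    show "norm (Blinfun f) \<le> 1"
      by (rule norm_blinfun_bound) (use bl absb in \<open>auto simp: bounded_linear_Blinfun_apply\<close>)
    show "blinfun_apply (Blinfun f) u = norm u" using bl fu by (simp add: bounded_linear_Blinfun_apply)
  qed
qed

lemma E_sum:
  assumes "finite (set_pmf p)"
  shows "measure_pmf.expectation p f = (\<Sum>x\<in>set_pmf p. pmf p x * f x)"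
  by (subst integral_measure_pmf_real[of "set_pmf p"]) (use assms in \<open>auto simp: mult.commute\<close>)

lemma sum_pmf_1: "finite (set_pmf p) \<Longrightarrow> (\<Sum>x\<in>set_pmf p. pmf p x) = 1"
  by (rule sum_pmf_eq_1) auto

lemma E_mono:
  fixes f g :: "'a \<Rightarrow> real"
  assumes "finite (set_pmf p)" "\<And>x. x \<in> set_pmf p \<Longrightarrow> f x \<le> g x"
  shows "measure_pmf.expectation p f \<le> measure_pmf.expectation p g"
  unfolding E_sum[OF assms(1)] by (rule sum_mono) (use assms(2) in \<open>auto intro: mult_left_mono\<close>)

lemma E_cong:
  fixes f g :: "'a \<Rightarrow> real"
  assumes "finite (set_pmf p)" "\<And>x. x \<in> set_pmf p \<Longrightarrow> f x = g x"
  shows "measure_pmf.expectation p f = measure_pmf.expectation p g"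
  unfolding E_sum[OF assms(1)] using assms(2) by simp

lemma E_const: "measure_pmf.expectation p (\<lambda>x. c) = (c::real)"
  by simp

lemma E_le_const:
  fixes f g :: "'a \<Rightarrow> real"
  assumes "finite (set_pmf p)" "\<And>x. x \<in> set_pmf p \<Longrightarrow> f x \<le> c"
  shows "measure_pmf.expectation p f \<le> c"
  using E_mono[OF assms(1), of f "\<lambda>x. c"] assms(2) by simp

lemma E_nonneg:
  fixes f g :: "'a \<Rightarrow> real"
  assumes "finite (set_pmf p)" "\<And>x. x \<in> set_pmf p \<Longrightarrow> 0 \<le> f x"
  shows "0 \<le> measure_pmf.expectation p f"
  using E_mono[OF assms(1), of "\<lambda>x. 0" f] assms(2) by simp

lemma E_add: "finite (set_pmf p) \<Longrightarrow> measure_pmf.expectation p (\<lambda>x. f x + g x) = measure_pmf.expectation p f + measure_pmf.expectation p (g::_\<Rightarrow>real)"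
  unfolding E_sum by (simp add: sum.distrib distrib_left)

lemma E_cmult: "finite (set_pmf p) \<Longrightarrow> measure_pmf.expectation p (\<lambda>x. c * f x) = c * measure_pmf.expectation p (f::_\<Rightarrow>real)"
  unfolding E_sum by (simp add: sum_distrib_left mult.left_commute)

lemma E_sumI: "finite (set_pmf p) \<Longrightarrow> finite I \<Longrightarrow> measure_pmf.expectation p (\<lambda>x. \<Sum>i\<in>I. f i x) = (\<Sum>i\<in>I. measure_pmf.expectation p (f i::_\<Rightarrow>real))"
  unfolding E_sum by (simp add: sum_distrib_left sum.swap[of _ I])

lemma variance_pos_form:
  fixes F :: "'a \<Rightarrow> real"
  assumes fin: "finite (set_pmf p)"
  shows "measure_pmf.variance p F =
    measure_pmf.expectation p (\<lambda>y. measure_pmf.expectation p (\<lambda>z. (max (F y - F z) 0)\<^sup>2))"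
proof -
  define A where "A = set_pmf p"
  have finA: "finite A" using fin A_def by simp
  define w where "w = pmf p"
  have s1: "(\<Sum>x\<in>A. w x) = 1" using sum_pmf_1[OF fin] unfolding A_def w_def .
  define m where "m = (\<Sum>x\<in>A. w x * F x)"
  have Em: "measure_pmf.expectation p F = m" unfolding m_def E_sum[OF fin] A_def w_def ..
  have "measure_pmf.variance p F = (\<Sum>x\<in>A. w x * (F x - m)\<^sup>2)"
    unfolding Em by (subst E_sum[OF fin]) (simp add: A_def w_def)
  also have "\<dots> = (\<Sum>x\<in>A. w x * (F x)\<^sup>2) - m\<^sup>2"
  proof -
    have "(\<Sum>x\<in>A. w x * (F x - m)\<^sup>2) = (\<Sum>x\<in>A. w x * (F x)\<^sup>2 - 2 * m * (w x * F x) + m\<^sup>2 * w x)"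
      by (intro sum.cong) (auto simp: power2_eq_square algebra_simps)
    also have "\<dots> = (\<Sum>x\<in>A. w x * (F x)\<^sup>2) - 2 * m * m + m\<^sup>2 * 1"
      by (simp add: sum.distrib sum_subtractf sum_distrib_left[symmetric] m_def s1[symmetric])
    finally show ?thesis by (simp add: power2_eq_square)
  qed
  finally have V: "measure_pmf.variance p F = (\<Sum>x\<in>A. w x * (F x)\<^sup>2) - m\<^sup>2" .
  define D where "D y z = (max (F y - F z) 0)\<^sup>2" for y z
  have RHS: "measure_pmf.expectation p (\<lambda>y. measure_pmf.expectation p (\<lambda>z. D y z)) =
      (\<Sum>y\<in>A. \<Sum>z\<in>A. w y * w z * D y z)"
    unfolding E_sum[OF fin] A_def w_def by (simp add: sum_distrib_left mult.assoc)
  have sym: "(\<Sum>y\<in>A. \<Sum>z\<in>A. w y * w z * D y z) = (\<Sum>y\<in>A. \<Sum>z\<in>A. w y * w z * D z y)"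
    by (subst sum.swap) (simp add: mult.commute)
  have Dsum: "D y z + D z y = (F y - F z)\<^sup>2" for y z
    unfolding D_def by (cases "F y \<le> F z") (auto simp: max_def power2_eq_square algebra_simps)
  have "2 * (\<Sum>y\<in>A. \<Sum>z\<in>A. w y * w z * D y z) = (\<Sum>y\<in>A. \<Sum>z\<in>A. w y * w z * (F y - F z)\<^sup>2)"
  proof -
    have "2 * (\<Sum>y\<in>A. \<Sum>z\<in>A. w y * w z * D y z) =
       (\<Sum>y\<in>A. \<Sum>z\<in>A. w y * w z * D y z) + (\<Sum>y\<in>A. \<Sum>z\<in>A. w y * w z * D z y)"
      using sym by simp
    also have "\<dots> = (\<Sum>y\<in>A. \<Sum>z\<in>A. w y * w z * (D y z + D z y))"
      by (simp add: sum.distrib distrib_left)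
    finally show ?thesis by (simp add: Dsum)
  qed
  also have "\<dots> = (\<Sum>y\<in>A. \<Sum>z\<in>A. w y * w z * (F y)\<^sup>2 + w y * w z * (F z)\<^sup>2 - 2 * (w y * F y) * (w z * F z))"
    by (intro sum.cong refl) (simp add: power2_eq_square algebra_simps)
  also have "\<dots> = 2 * ((\<Sum>x\<in>A. w x * (F x)\<^sup>2) - m\<^sup>2)"
  proof -
    have a: "(\<Sum>y\<in>A. \<Sum>z\<in>A. w y * w z * (F y)\<^sup>2) = (\<Sum>x\<in>A. w x * (F x)\<^sup>2)"
    proof -
      have "(\<Sum>y\<in>A. \<Sum>z\<in>A. w y * w z * (F y)\<^sup>2) = (\<Sum>y\<in>A. w y * (F y)\<^sup>2 * (\<Sum>z\<in>A. w z))"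
        by (simp add: sum_distrib_left sum_distrib_right mult_ac)
      thus ?thesis using s1 by simp
    qed
    have b: "(\<Sum>y\<in>A. \<Sum>z\<in>A. w y * w z * (F z)\<^sup>2) = (\<Sum>x\<in>A. w x * (F x)\<^sup>2)"
    proof -
      have "(\<Sum>y\<in>A. \<Sum>z\<in>A. w y * w z * (F z)\<^sup>2) = (\<Sum>y\<in>A. w y * (\<Sum>z\<in>A. w z * (F z)\<^sup>2))"
        by (simp add: sum_distrib_left mult_ac)
      also have "\<dots> = (\<Sum>y\<in>A. w y) * (\<Sum>z\<in>A. w z * (F z)\<^sup>2)" by (simp add: sum_distrib_right)
      finally show ?thesis using s1 by simp
    qed
    have c: "(\<Sum>y\<in>A. \<Sum>z\<in>A. 2 * (w y * F y) * (w z * F z)) = 2 * m\<^sup>2"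
      by (simp add: m_def power2_eq_square sum_distrib_left sum_distrib_right mult_ac)
    have "(\<Sum>y\<in>A. \<Sum>z\<in>A. w y * w z * (F y)\<^sup>2 + w y * w z * (F z)\<^sup>2 - 2 * (w y * F y) * (w z * F z))
       = (\<Sum>y\<in>A. \<Sum>z\<in>A. w y * w z * (F y)\<^sup>2) + (\<Sum>y\<in>A. \<Sum>z\<in>A. w y * w z * (F z)\<^sup>2)
         - (\<Sum>y\<in>A. \<Sum>z\<in>A. 2 * (w y * F y) * (w z * F z))"
      by (simp add: sum.distrib sum_subtractf)
    thus ?thesis using a b c by simp
  qed
  finally show ?thesis using V RHS unfolding D_def by simp
qed

abbreviation cset :: "'n \<Rightarrow> (real,'n::finite) vec \<Rightarrow> (real,'n) vec set" where
  "cset i x \<equiv> {y. \<forall>j. j \<noteq> i \<longrightarrow> y $ j = x $ j}"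

lemma cset_self: "x \<in> cset i x" by simp

lemma cset_same: "y \<in> cset i x \<Longrightarrow> cset i y = cset i x" by auto

lemma set_cond_cset:
  assumes "x \<in> set_pmf \<mu>"
  shows "set_pmf (cond_pmf \<mu> (cset i x)) = set_pmf \<mu> \<inter> cset i x"
  using assms by (intro set_cond_pmf) auto

lemma fin_cond:
  assumes "finite (set_pmf \<mu>)" "x \<in> set_pmf \<mu>"
  shows "finite (set_pmf (cond_pmf \<mu> (cset i x)))"
  using assms set_cond_cset[OF assms(2)] by simp

lemma tower:
  fixes \<mu> :: "(real,'n::finite) vec pmf" and k :: "(real,'n) vec \<Rightarrow> real"
  assumes fin: "finite (set_pmf \<mu>)"
  shows "measure_pmf.expectation \<mu> (\<lambda>x. measure_pmf.expectation (cond_pmf \<mu> (cset i x)) k)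
       = measure_pmf.expectation \<mu> k"
proof -
  define R where "R x y \<longleftrightarrow> (\<forall>j. j \<noteq> i \<longrightarrow> y $ j = x $ j)" for x y :: "(real,'n) vec"
  have Rset: "{y. R x y} = cset i x" for x unfolding R_def by simp
  have b: "bind_pmf \<mu> (\<lambda>x. cond_pmf \<mu> {y. R x y}) = \<mu>"
  proof (rule bind_cond_pmf_cancel)
    show "set_pmf \<mu> \<inter> {y. R x y} \<noteq> {}" if "x \<in> set_pmf \<mu>" for x
      using that unfolding R_def by auto
    show "set_pmf \<mu> \<inter> {x. R x y} \<noteq> {}" if "y \<in> set_pmf \<mu>" for y
      using that unfolding R_def by auto
    show "measure (measure_pmf \<mu>) {y. R x y} = measure (measure_pmf \<mu>) {x. R x y}"
      if "x \<in> set_pmf \<mu>" "y \<in> set_pmf \<mu>" "R x y" for x y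
    proof -
      have "{y. R x y} = {x. R x y}" using that(3) unfolding R_def by auto
      thus ?thesis by simp
    qed
  qed
  have "measure_pmf.expectation \<mu> k = measure_pmf.expectation (bind_pmf \<mu> (\<lambda>x. cond_pmf \<mu> {y. R x y})) k"
    by (simp add: b)
  also have "\<dots> = (\<Sum>a\<in>set_pmf \<mu>. pmf \<mu> a *\<^sub>R measure_pmf.expectation (cond_pmf \<mu> {y. R a y}) k)"
    by (rule pmf_expectation_bind) (use fin fin_cond Rset in auto)
  also have "\<dots> = measure_pmf.expectation \<mu> (\<lambda>x. measure_pmf.expectation (cond_pmf \<mu> (cset i x)) k)"
    by (subst E_sum[OF fin]) (simp add: Rset)
  finally show ?thesis ..
qed

definition Gam :: "(real,'n::finite) vec pmf \<Rightarrow> ((real,'n) vec \<Rightarrow> real) \<Rightarrow> (real,'n) vec \<Rightarrow> real" where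
  "Gam \<mu> g x = (\<Sum>i\<in>UNIV. measure_pmf.expectation (cond_pmf \<mu> (cset i x)) (\<lambda>z. (max (g x - g z) 0)\<^sup>2))"

lemma exp_diff_bound:
  fixes l u v :: real
  assumes "0 \<le> l"
  shows "(max (exp (l * u / 2) - exp (l * v / 2)) 0)\<^sup>2 \<le> l\<^sup>2 / 4 * exp (l * u) * (max (u - v) 0)\<^sup>2"
proof (cases "l * v / 2 < l * u / 2")
  case False
  hence "exp (l * u / 2) \<le> exp (l * v / 2)" by simp
  hence "max (exp (l * u / 2) - exp (l * v / 2)) 0 = 0" by simp
  thus ?thesis by simp
next
  case True
  define a where "a = l * u / 2"
  define b where "b = l * v / 2"
  have ab: "b < a" using True a_def b_def by simp
  have lpos: "0 < l" using ab assms a_def b_def by (cases "l = 0") auto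
  have uv: "v < u" using ab lpos a_def b_def by (simp add: mult_less_cancel_left_pos)
  have "exp (b - a) \<ge> 1 + (b - a)" by (rule exp_ge_add_one_self)
  hence "exp b \<ge> exp a * (1 + (b - a))" by (simp add: exp_diff field_simps)
  hence d: "exp a - exp b \<le> (a - b) * exp a" by (simp add: algebra_simps)
  have nn: "0 \<le> exp a - exp b" using ab by simp
  have "(max (exp a - exp b) 0)\<^sup>2 = (exp a - exp b)\<^sup>2" using nn by simp
  also have "\<dots> \<le> ((a - b) * exp a)\<^sup>2" using d nn by (intro power_mono) auto
  also have "((a - b) * exp a)\<^sup>2 = l\<^sup>2 / 4 * exp (l * u) * (u - v)\<^sup>2"
  proof -
    have "(exp a)\<^sup>2 = exp (l * u)" unfolding a_def by (simp add: power2_eq_square exp_add[symmetric])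
    moreover have "a - b = l * (u - v) / 2" unfolding a_def b_def by (simp add: algebra_simps)
    hence "(a - b)\<^sup>2 = l\<^sup>2 * (u - v)\<^sup>2 / 4" by (simp only: power_mult_distrib power_divide) simp
    ultimately show ?thesis by (simp add: power_mult_distrib)
  qed
  also have "(u - v)\<^sup>2 = (max (u - v) 0)\<^sup>2" using uv by simp
  finally show ?thesis unfolding a_def b_def .
qed

lemma engine:
  fixes \<mu> :: "(real,'n::finite) vec pmf" and g :: "(real,'n) vec \<Rightarrow> real"
  assumes fin: "finite (set_pmf \<mu>)" and lsi: "d_LSI \<mu> \<sigma>" and lam: "0 \<le> l"
  shows "ent \<mu> (\<lambda>x. exp (l * g x)) \<le> \<sigma>\<^sup>2 * l\<^sup>2 / 2 * measure_pmf.expectation \<mu> (\<lambda>x. exp (l * g x) * Gam \<mu> g x)"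
proof -
  define F where "F x = exp (l * g x / 2)" for x
  have F2: "(F x)\<^sup>2 = exp (l * g x)" for x unfolding F_def by (simp add: power2_eq_square exp_add[symmetric])
  have L: "ent \<mu> (\<lambda>x. exp (l * g x)) \<le> 2 * \<sigma>\<^sup>2 * measure_pmf.expectation \<mu> (grad_sq \<mu> F)"
    using lsi unfolding d_LSI_def F2[symmetric] by blast
  define H where "H i x = measure_pmf.expectation (cond_pmf \<mu> (cset i x)) (\<lambda>z. (max (g x - g z) 0)\<^sup>2)" for i x
  have step: "measure_pmf.expectation \<mu> (d_sq \<mu> F i) \<le>
      l\<^sup>2 / 4 * measure_pmf.expectation \<mu> (\<lambda>x. exp (l * g x) * H i x)" for i
  proof -
    define h where "h y = l\<^sup>2 / 4 * (exp (l * g y) * H i y)" for y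
    have pw: "d_sq \<mu> F i x \<le> measure_pmf.expectation (cond_pmf \<mu> (cset i x)) h" if x: "x \<in> set_pmf \<mu>" for x
    proof -
      define \<nu> where "\<nu> = cond_pmf \<mu> (cset i x)"
      have fn: "finite (set_pmf \<nu>)" unfolding \<nu>_def using fin_cond[OF fin x] .
      have "d_sq \<mu> F i x = measure_pmf.expectation \<nu> (\<lambda>y. measure_pmf.expectation \<nu> (\<lambda>z. (max (F y - F z) 0)\<^sup>2))"
        unfolding d_sq_def \<nu>_def by (rule variance_pos_form) (use fn in \<open>simp add: \<nu>_def\<close>)
      also have "\<dots> \<le> measure_pmf.expectation \<nu> (\<lambda>y. measure_pmf.expectation \<nu>
            (\<lambda>z. l\<^sup>2 / 4 * exp (l * g y) * (max (g y - g z) 0)\<^sup>2))"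
        by (intro E_mono fn) (unfold F_def, rule exp_diff_bound[OF lam])
      also have "\<dots> = measure_pmf.expectation \<nu> h"
      proof (rule E_cong[OF fn])
        fix y assume y: "y \<in> set_pmf \<nu>"
        hence yc: "y \<in> cset i x" unfolding \<nu>_def using set_cond_cset[OF x] by auto
        have "measure_pmf.expectation \<nu> (\<lambda>z. l\<^sup>2 / 4 * exp (l * g y) * (max (g y - g z) 0)\<^sup>2)
            = l\<^sup>2 / 4 * exp (l * g y) * measure_pmf.expectation \<nu> (\<lambda>z. (max (g y - g z) 0)\<^sup>2)"
          using E_cmult[OF fn, of "l\<^sup>2 / 4 * exp (l * g y)"] by (simp add: mult.assoc)
        also have "\<nu> = cond_pmf \<mu> (cset i y)" unfolding \<nu>_def using cset_same[OF yc] by simp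
        hence "measure_pmf.expectation \<nu> (\<lambda>z. (max (g y - g z) 0)\<^sup>2) = H i y" unfolding H_def by simp
        finally show "measure_pmf.expectation \<nu> (\<lambda>z. l\<^sup>2 / 4 * exp (l * g y) * (max (g y - g z) 0)\<^sup>2) = h y"
          unfolding h_def by (simp add: mult.assoc)
      qed
      finally show ?thesis unfolding \<nu>_def .
    qed
    have "measure_pmf.expectation \<mu> (d_sq \<mu> F i) \<le>
        measure_pmf.expectation \<mu> (\<lambda>x. measure_pmf.expectation (cond_pmf \<mu> (cset i x)) h)"
      by (rule E_mono[OF fin pw])
    also have "\<dots> = measure_pmf.expectation \<mu> h" by (rule tower[OF fin])
    also have "\<dots> = l\<^sup>2 / 4 * measure_pmf.expectation \<mu> (\<lambda>x. exp (l * g x) * H i x)"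
      unfolding h_def by (rule E_cmult[OF fin])
    finally show ?thesis .
  qed
  have "measure_pmf.expectation \<mu> (grad_sq \<mu> F) = (\<Sum>i\<in>UNIV. measure_pmf.expectation \<mu> (d_sq \<mu> F i))"
    unfolding grad_sq_def by (rule E_sumI[OF fin]) simp
  also have "\<dots> \<le> (\<Sum>i\<in>UNIV. l\<^sup>2 / 4 * measure_pmf.expectation \<mu> (\<lambda>x. exp (l * g x) * H i x))"
    by (rule sum_mono) (rule step)
  also have "\<dots> = l\<^sup>2 / 4 * measure_pmf.expectation \<mu> (\<lambda>x. exp (l * g x) * Gam \<mu> g x)"
  proof -
    have "measure_pmf.expectation \<mu> (\<lambda>x. exp (l * g x) * Gam \<mu> g x) =
          measure_pmf.expectation \<mu> (\<lambda>x. \<Sum>i\<in>UNIV. exp (l * g x) * H i x)"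
      unfolding Gam_def H_def by (simp add: sum_distrib_left)
    also have "\<dots> = (\<Sum>i\<in>UNIV. measure_pmf.expectation \<mu> (\<lambda>x. exp (l * g x) * H i x))"
      by (rule E_sumI[OF fin]) simp
    finally show ?thesis by (simp add: sum_distrib_left)
  qed
  finally have G: "measure_pmf.expectation \<mu> (grad_sq \<mu> F) \<le>
      l\<^sup>2 / 4 * measure_pmf.expectation \<mu> (\<lambda>x. exp (l * g x) * Gam \<mu> g x)" .
  have "ent \<mu> (\<lambda>x. exp (l * g x)) \<le> 2 * \<sigma>\<^sup>2 * (l\<^sup>2 / 4 * measure_pmf.expectation \<mu> (\<lambda>x. exp (l * g x) * Gam \<mu> g x))"
    using L G by (meson mult_left_mono order_trans zero_le_mult_iff zero_le_numeral zero_le_power2)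
  thus ?thesis by (simp add: algebra_simps)
qed

lemma mono_limit:
  fixes k k' :: "real \<Rightarrow> real"
  assumes der: "\<And>x. 0 < x \<Longrightarrow> x \<le> l \<Longrightarrow> (k has_real_derivative k' x) (at x)"
    and neg: "\<And>x. 0 < x \<Longrightarrow> x \<le> l \<Longrightarrow> k' x \<le> 0"
    and lim: "(k \<longlongrightarrow> \<kappa>) (at_right 0)" and l: "0 < l"
  shows "k l \<le> \<kappa>"
proof -
  have "eventually (\<lambda>e. e \<in> {0<..<l}) (at_right (0::real))" using l by (rule eventually_at_right_real)
  hence ev: "eventually (\<lambda>e. k l \<le> k e) (at_right (0::real))"
  proof (rule eventually_mono)
    fix e assume "e \<in> {0<..<l}"
    hence e: "0 < e" "e < l" by auto
    show "k l \<le> k e"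
      by (rule DERIV_nonpos_imp_nonincreasing[of e l k]) (use e der neg in \<open>force+\<close>)
  qed
  show ?thesis by (rule tendsto_lowerbound[OF lim ev]) simp
qed

definition MGF :: "'a pmf \<Rightarrow> ('a \<Rightarrow> real) \<Rightarrow> real \<Rightarrow> real" where
  "MGF \<mu> g l = measure_pmf.expectation \<mu> (\<lambda>x. exp (l * g x))"

definition MGD :: "'a pmf \<Rightarrow> ('a \<Rightarrow> real) \<Rightarrow> real \<Rightarrow> real" where
  "MGD \<mu> g l = measure_pmf.expectation \<mu> (\<lambda>x. g x * exp (l * g x))"

lemma MGF_pos: "finite (set_pmf \<mu>) \<Longrightarrow> 0 < MGF \<mu> g l"
proof -
  assume fin: "finite (set_pmf \<mu>)"
  obtain x0 where x0: "x0 \<in> set_pmf \<mu>" using set_pmf_not_empty[of \<mu>] by blast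
  have "MGF \<mu> g l = (\<Sum>x\<in>set_pmf \<mu>. pmf \<mu> x * exp (l * g x))" unfolding MGF_def E_sum[OF fin] ..
  also have "\<dots> > 0"
  proof (rule sum_pos2[OF fin x0])
    show "0 < pmf \<mu> x0 * exp (l * g x0)" using x0 by (simp add: pmf_positive)
    show "\<And>i. i \<in> set_pmf \<mu> \<Longrightarrow> 0 \<le> pmf \<mu> i * exp (l * g i)" by simp
  qed
  finally show ?thesis .
qed

lemma MGF_0: "MGF \<mu> g 0 = 1" unfolding MGF_def by simp

lemma MGD_0: "MGD \<mu> g 0 = measure_pmf.expectation \<mu> g" unfolding MGD_def by simp

lemma MGF_deriv:
  assumes fin: "finite (set_pmf \<mu>)"
  shows "(MGF \<mu> g has_real_derivative MGD \<mu> g l) (at l)"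
proof -
  have e1: "MGF \<mu> g = (\<lambda>l. \<Sum>x\<in>set_pmf \<mu>. pmf \<mu> x * exp (l * g x))"
    unfolding MGF_def E_sum[OF fin] ..
  have e2: "MGD \<mu> g l = (\<Sum>x\<in>set_pmf \<mu>. pmf \<mu> x * (exp (l * g x) * g x))"
    unfolding MGD_def E_sum[OF fin] by (simp add: mult_ac)
  show ?thesis unfolding e1 e2
    by (rule DERIV_sum) (auto intro!: derivative_eq_intros)
qed

lemma ent_exp:
  assumes fin: "finite (set_pmf \<mu>)"
  shows "ent \<mu> (\<lambda>x. exp (l * g x)) = l * MGD \<mu> g l - MGF \<mu> g l * ln (MGF \<mu> g l)"
proof -
  have "measure_pmf.expectation \<mu> (\<lambda>x. xlogx (exp (l * g x))) = l * MGD \<mu> g l"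
  proof -
    have "(\<lambda>x. xlogx (exp (l * g x))) = (\<lambda>x. l * (g x * exp (l * g x)))"
      by (rule ext) (simp add: xlogx_def)
    thus ?thesis unfolding MGD_def by (simp add: E_cmult[OF fin])
  qed
  moreover have "xlogx (MGF \<mu> g l) = MGF \<mu> g l * ln (MGF \<mu> g l)"
    using MGF_pos[OF fin, of g l] unfolding xlogx_def by simp
  ultimately show ?thesis unfolding ent_def MGF_def by simp
qed

lemma lnMGF_limit:
  assumes fin: "finite (set_pmf \<mu>)"
  shows "((\<lambda>l. ln (MGF \<mu> g l) / l) \<longlongrightarrow> measure_pmf.expectation \<mu> g) (at_right 0)"
proof -
  have d: "((\<lambda>l. ln (MGF \<mu> g l)) has_real_derivative (1 / MGF \<mu> g 0) * MGD \<mu> g 0) (at 0)"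
    by (rule DERIV_chain2[OF DERIV_ln_divide MGF_deriv[OF fin]]) (use MGF_pos[OF fin] in auto)
  hence "((\<lambda>y. (ln (MGF \<mu> g y) - ln (MGF \<mu> g 0)) / (y - 0)) \<longlongrightarrow> (1 / MGF \<mu> g 0) * MGD \<mu> g 0) (at 0)"
    by (rule has_field_derivative_iff[THEN iffD1])
  hence "((\<lambda>y. ln (MGF \<mu> g y) / y) \<longlongrightarrow> measure_pmf.expectation \<mu> g) (at 0)"
    by (simp add: MGF_0 MGD_0)
  thus ?thesis by (rule tendsto_mono[OF at_le, rotated]) simp
qed

lemma herbst1:
  assumes fin: "finite (set_pmf \<mu>)"
    and H: "\<And>l. 0 < l \<Longrightarrow> l \<le> L \<Longrightarrow> ent \<mu> (\<lambda>x. exp (l * g x)) \<le> \<phi> * l\<^sup>2 * MGF \<mu> g l"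
    and l: "0 < l" "l \<le> L"
  shows "ln (MGF \<mu> g l) \<le> l * measure_pmf.expectation \<mu> g + \<phi> * l\<^sup>2"
proof -
  define G where "G = MGF \<mu> g"
  define D where "D = MGD \<mu> g"
  define m where "m = measure_pmf.expectation \<mu> g"
  define k where "k t = ln (G t) / t - m - \<phi> * t" for t
  define k' where "k' t = ((1 / G t * D t) * t - ln (G t) * 1) / (t * t) - 0 - \<phi> * 1" for t
  have Gpos: "0 < G t" for t unfolding G_def by (rule MGF_pos[OF fin])
  have der: "(k has_real_derivative k' x) (at x)" if "0 < x" for x
  proof -
    have "((\<lambda>t. ln (G t)) has_real_derivative (1 / G x * D x)) (at x)"
      unfolding G_def D_def by (rule DERIV_chain2[OF DERIV_ln_divide MGF_deriv[OF fin]]) (use MGF_pos[OF fin] in auto)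
    hence d2: "((\<lambda>t. ln (G t) / t) has_real_derivative ((1 / G x * D x) * x - ln (G x) * 1) / (x * x)) (at x)"
      using that by (intro DERIV_divide[OF _ DERIV_ident]) auto
    show ?thesis unfolding k_def k'_def
      by (rule DERIV_diff[OF DERIV_diff[OF d2 DERIV_const] DERIV_cmult[OF DERIV_ident]])
  qed
  have neg: "k' x \<le> 0" if "0 < x" "x \<le> L" for x
  proof -
    have e: "x * D x - G x * ln (G x) \<le> \<phi> * x\<^sup>2 * G x"
      using H[OF that] ent_exp[OF fin, of x g] unfolding G_def D_def by simp
    have "((1 / G x * D x) * x - ln (G x)) = (x * D x - G x * ln (G x)) / G x"
      using Gpos[of x] by (simp add: field_simps)
    also have "\<dots> \<le> \<phi> * x\<^sup>2" using e Gpos[of x] by (simp add: divide_le_eq)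
    finally have "((1 / G x * D x) * x - ln (G x)) / (x * x) \<le> \<phi>"
      using that by (simp add: divide_le_eq power2_eq_square)
    thus ?thesis unfolding k'_def by simp
  qed
  have lim: "(k \<longlongrightarrow> m - m - \<phi> * 0) (at_right 0)"
    unfolding k_def G_def m_def
    by (intro tendsto_diff lnMGF_limit[OF fin] tendsto_const tendsto_mult tendsto_ident_at)
  have "k l \<le> 0" using mono_limit[of l k k' "m - m - \<phi> * 0", OF der neg lim l(1)] l by simp
  thus ?thesis unfolding k_def G_def m_def using l by (simp add: divide_le_eq power2_eq_square algebra_simps)
qed

lemma herbst2:
  assumes fin: "finite (set_pmf \<mu>)" and a: "0 < a"
    and H: "\<And>t. 0 < t \<Longrightarrow> t < 1 / a \<Longrightarrow> ent \<mu> (\<lambda>x. exp (t * g x)) \<le> a * t\<^sup>2 * MGD \<mu> g t"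
    and t: "0 < t" "t < 1 / a"
  shows "ln (MGF \<mu> g t) \<le> t * measure_pmf.expectation \<mu> g / (1 - a * t)"
proof -
  define G where "G = MGF \<mu> g"
  define D where "D = MGD \<mu> g"
  define m where "m = measure_pmf.expectation \<mu> g"
  define k where "k s = ln (G s) / s * (1 - a * s)" for s
  define k' where "k' s = ((1 / G s * D s) * s - ln (G s) * 1) / (s * s) * (1 - a * s) + (0 - a * 1) * (ln (G s) / s)" for s
  have Gpos: "0 < G s" for s unfolding G_def by (rule MGF_pos[OF fin])
  have der: "(k has_real_derivative k' x) (at x)" if "0 < x" for x
  proof -
    have "((\<lambda>s. ln (G s)) has_real_derivative (1 / G x * D x)) (at x)"
      unfolding G_def D_def by (rule DERIV_chain2[OF DERIV_ln_divide MGF_deriv[OF fin]]) (use MGF_pos[OF fin] in auto)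
    hence d2: "((\<lambda>s. ln (G s) / s) has_real_derivative ((1 / G x * D x) * x - ln (G x) * 1) / (x * x)) (at x)"
      using that by (intro DERIV_divide[OF _ DERIV_ident]) auto
    show ?thesis unfolding k_def k'_def
      by (rule DERIV_mult[OF d2 DERIV_diff[OF DERIV_const DERIV_cmult[OF DERIV_ident]]])
  qed
  have neg: "k' x \<le> 0" if "0 < x" "x \<le> t" for x
  proof -
    have x1: "x < 1 / a" using that t by simp
    hence ax: "a * x < 1" using a by (simp add: field_simps)
    have e: "x * D x - G x * ln (G x) \<le> a * x\<^sup>2 * D x"
      using H[OF that(1) x1] ent_exp[OF fin, of x g] unfolding G_def D_def by simp
    have "k' x = (x * D x * (1 - a * x) - G x * ln (G x)) / (G x * x\<^sup>2)"
      unfolding k'_def using Gpos[of x] that(1) by (simp add: field_simps power2_eq_square)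
    also have "\<dots> \<le> 0"
    proof -
      have "x * D x * (1 - a * x) - G x * ln (G x) \<le> 0" using e by (simp add: algebra_simps power2_eq_square)
      thus ?thesis using Gpos[of x] that(1) by (simp add: divide_nonpos_pos)
    qed
    finally show ?thesis .
  qed
  have lim: "(k \<longlongrightarrow> m * (1 - a * 0)) (at_right 0)"
    unfolding k_def G_def m_def
    by (intro tendsto_mult lnMGF_limit[OF fin] tendsto_diff tendsto_const tendsto_ident_at)
  have "k t \<le> m" using mono_limit[of t k k' "m * (1 - a * 0)", OF der neg lim t(1)] by simp
  moreover have "0 < 1 - a * t" using t a by (simp add: field_simps)
  ultimately show ?thesis unfolding k_def G_def m_def using t
    by (simp add: le_divide_eq divide_le_eq mult.commute)
qed

definition Aop :: "('n::{finite,linorder} \<Rightarrow> 'n \<Rightarrow> 'b::real_normed_vector) \<Rightarrow> ('b \<Rightarrow>\<^sub>L real) \<Rightarrow> ((real,'n) vec,'n) vec" where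
  "Aop t v = (\<chi> i j. blinfun_apply v (ext_fam t i j))"

definition Wv :: "('n::{finite,linorder} \<Rightarrow> 'n \<Rightarrow> 'b::real_normed_vector) \<Rightarrow> ('b \<Rightarrow>\<^sub>L real) \<Rightarrow> (real,'n) vec \<Rightarrow> real" where
  "Wv t v x = sqrt (\<Sum>i\<in>UNIV. (\<Sum>j\<in>UNIV. x $ j * blinfun_apply v (ext_fam t i j))\<^sup>2)"

definition Wf :: "('n::{finite,linorder} \<Rightarrow> 'n \<Rightarrow> 'b::real_normed_vector) set \<Rightarrow> (real,'n) vec \<Rightarrow> real" where
  "Wf \<T> x = (SUP t\<in>\<T>. SUP v\<in>dual_ball. Wv t v x)"

definition qf :: "('n::{finite,linorder} \<Rightarrow> 'n \<Rightarrow> 'b::real_normed_vector) \<Rightarrow> (real,'n) vec \<Rightarrow> 'b" where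
  "qf t x = (\<Sum>(i,j)\<in>{(i,j). i < j}. (x $ i * x $ j) *\<^sub>R t i j)"

lemma T1_eq: "T1 \<mu> \<T> = measure_pmf.expectation \<mu> (Wf \<T>)"
  unfolding T1_def Wf_def Wv_def ..

lemma T2_eq: "T2 \<T> = (SUP t\<in>\<T>. SUP v\<in>dual_ball. onorm ((*v) (Aop t v)))"
  unfolding T2_def Aop_def by simp

lemma fT_eq: "fT \<T> x = (SUP t\<in>\<T>. norm (qf t x))"
  unfolding fT_def qf_def ..

lemma ext_sym: "ext_fam t i j = ext_fam t j i"
  unfolding ext_fam_def by (cases i j rule: linorder_cases) auto

lemma Aop_sym: "Aop t v $ i $ j = Aop t v $ j $ i"
  unfolding Aop_def by (simp add: ext_sym)

lemma Wv_norm: "Wv t v x = norm (Aop t v *v x)"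
  unfolding Wv_def norm_vec_def L2_set_def Aop_def matrix_vector_mult_def
  by (simp add: mult.commute)

lemma zero_dual: "0 \<in> dual_ball" unfolding dual_ball_def by simp

locale conc =
  fixes \<mu> :: "(real,'n::{finite,linorder}) vec pmf" and \<T> :: "('n \<Rightarrow> 'n \<Rightarrow> 'b::banach) set"
    and a b \<sigma> M :: real
  assumes fin: "finite (set_pmf \<mu>)"
    and coord: "\<And>x i. x \<in> set_pmf \<mu> \<Longrightarrow> x $ i \<in> {a..b}"
    and ab: "a < b"
    and lsi: "d_LSI \<mu> \<sigma>"
    and Tne: "\<T> \<noteq> {}"
    and Mb: "\<And>t i j. t \<in> \<T> \<Longrightarrow> norm (t i j) \<le> M"
begin

lemma M_nonneg: "0 \<le> M"
  using Tne Mb by (meson ex_in_conv norm_ge_zero order_trans)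

lemma ext_bound: "t \<in> \<T> \<Longrightarrow> norm (ext_fam t i j) \<le> M"
  unfolding ext_fam_def using Mb M_nonneg by auto

lemma v_bound:
  assumes "t \<in> \<T>" "v \<in> dual_ball"
  shows "\<bar>blinfun_apply v (ext_fam t i j)\<bar> \<le> M"
proof -
  have "\<bar>blinfun_apply v (ext_fam t i j)\<bar> \<le> norm v * norm (ext_fam t i j)"
    using norm_blinfun[of v "ext_fam t i j"] by simp
  also have "\<dots> \<le> 1 * M"
    using assms ext_bound[of t i j] unfolding dual_ball_def
    by (intro mult_mono) auto
  finally show ?thesis by simp
qed

definition KW :: "(real,'n) vec \<Rightarrow> real" where
  "KW x = (\<Sum>i\<in>(UNIV::'n set). \<Sum>j\<in>UNIV. \<bar>x $ j\<bar> * M)"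

lemma row_bound:
  assumes "t \<in> \<T>" "v \<in> dual_ball"
  shows "\<bar>\<Sum>j\<in>UNIV. x $ j * blinfun_apply v (ext_fam t i j)\<bar> \<le> (\<Sum>j\<in>UNIV. \<bar>x $ j\<bar> * M)"
proof -
  have "\<bar>\<Sum>j\<in>UNIV. x $ j * blinfun_apply v (ext_fam t i j)\<bar> \<le> (\<Sum>j\<in>UNIV. \<bar>x $ j * blinfun_apply v (ext_fam t i j)\<bar>)"
    by (rule sum_abs)
  also have "\<dots> \<le> (\<Sum>j\<in>UNIV. \<bar>x $ j\<bar> * M)"
    by (intro sum_mono) (simp add: abs_mult mult_left_mono v_bound[OF assms])
  finally show ?thesis .
qed

lemma Wv_bound:
  assumes "t \<in> \<T>" "v \<in> dual_ball"
  shows "Wv t v x \<le> KW x"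
proof -
  have "Wv t v x = norm (Aop t v *v x)" by (rule Wv_norm)
  also have "\<dots> \<le> (\<Sum>i\<in>UNIV. \<bar>(Aop t v *v x) $ i\<bar>)" by (rule norm_le_l1_cart)
  also have "\<dots> \<le> KW x" unfolding KW_def
  proof (rule sum_mono)
    fix i
    have "(Aop t v *v x) $ i = (\<Sum>j\<in>UNIV. x $ j * blinfun_apply v (ext_fam t i j))"
      unfolding Aop_def matrix_vector_mult_def by (simp add: mult.commute)
    thus "\<bar>(Aop t v *v x) $ i\<bar> \<le> (\<Sum>j\<in>UNIV. \<bar>x $ j\<bar> * M)" using row_bound[OF assms] by simp
  qed
  finally show ?thesis .
qed

lemma Wv_nonneg: "0 \<le> Wv t v x" unfolding Wv_def by (simp add: sum_nonneg)

lemma bdd_in: "t \<in> \<T> \<Longrightarrow> bdd_above ((\<lambda>v. Wv t v x) ` dual_ball)"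
  using Wv_bound by (auto intro!: bdd_aboveI[of _ "KW x"])

lemma sup_in_bound: "t \<in> \<T> \<Longrightarrow> (SUP v\<in>dual_ball. Wv t v x) \<le> KW x"
  using Wv_bound zero_dual by (intro cSUP_least) auto

lemma bdd_out: "bdd_above ((\<lambda>t. SUP v\<in>dual_ball. Wv t v x) ` \<T>)"
  using sup_in_bound by (auto intro!: bdd_aboveI[of _ "KW x"])

lemma W_ge: "t \<in> \<T> \<Longrightarrow> v \<in> dual_ball \<Longrightarrow> Wv t v x \<le> Wf \<T> x"
  unfolding Wf_def
  by (rule order_trans[OF cSUP_upper[OF _ bdd_in] cSUP_upper[OF _ bdd_out]]) auto

lemma W_nonneg: "0 \<le> Wf \<T> x"
proof -
  obtain t where "t \<in> \<T>" using Tne by blast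
  thus ?thesis using order_trans[OF Wv_nonneg W_ge[OF _ zero_dual]] by blast
qed

lemma W_approx:
  assumes "0 < e"
  shows "\<exists>t\<in>\<T>. \<exists>v\<in>dual_ball. Wf \<T> x - e < Wv t v x"
proof -
  have "Wf \<T> x - e < (SUP t\<in>\<T>. SUP v\<in>dual_ball. Wv t v x)" using assms unfolding Wf_def by simp
  then obtain t where t: "t \<in> \<T>" "Wf \<T> x - e < (SUP v\<in>dual_ball. Wv t v x)"
    using less_cSUP_iff[OF Tne bdd_out, THEN iffD1] by blast
  have ne: "dual_ball \<noteq> {}" using zero_dual by blast
  obtain v where "v \<in> dual_ball" "Wf \<T> x - e < Wv t v x"
    using less_cSUP_iff[OF ne bdd_in[OF t(1)], THEN iffD1, OF t(2)] by blast
  thus ?thesis using t by blast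
qed

definition T2' :: real where "T2' = T2 \<T>"

lemma onorm_bd: "t \<in> \<T> \<Longrightarrow> v \<in> dual_ball \<Longrightarrow> onorm ((*v) (Aop t v)) \<le> real (CARD('n)) * real (CARD('n)) * M"
proof -
  assume tv: "t \<in> \<T>" "v \<in> dual_ball"
  have "onorm ((*v) (Aop t v)) \<le> (\<Sum>i\<in>UNIV. \<Sum>j\<in>UNIV. \<bar>Aop t v $ i $ j\<bar>)"
    by (rule onorm_le_matrix_component_sum)
  also have "\<dots> \<le> (\<Sum>i\<in>(UNIV::'n set). \<Sum>j\<in>(UNIV::'n set). M)"
    unfolding Aop_def using v_bound[OF tv] by (intro sum_mono) simp
  finally show ?thesis by simp
qed

lemma bdd_on_in: "t \<in> \<T> \<Longrightarrow> bdd_above ((\<lambda>v. onorm ((*v) (Aop t v))) ` dual_ball)"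
  using onorm_bd by (auto intro!: bdd_aboveI)

lemma bdd_on_out: "bdd_above ((\<lambda>t. SUP v\<in>dual_ball. onorm ((*v) (Aop t v))) ` \<T>)"
proof -
  have "(SUP v\<in>dual_ball. onorm ((*v) (Aop t v))) \<le> real (CARD('n)) * real (CARD('n)) * M" if "t \<in> \<T>" for t
    using onorm_bd[OF that] zero_dual by (intro cSUP_least) auto
  thus ?thesis by (auto intro!: bdd_aboveI)
qed

lemma onorm_le_T2: "t \<in> \<T> \<Longrightarrow> v \<in> dual_ball \<Longrightarrow> onorm ((*v) (Aop t v)) \<le> T2 \<T>"
  unfolding T2_eq
  by (rule order_trans[OF cSUP_upper[OF _ bdd_on_in] cSUP_upper[OF _ bdd_on_out]]) auto

lemma T2_nonneg: "0 \<le> T2 \<T>"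
proof -
  obtain t where "t \<in> \<T>" using Tne by blast
  thus ?thesis using onorm_le_T2[of t 0] zero_dual onorm_pos_le[of "(*v) (Aop t 0)"] by fastforce
qed

lemma Aop_norm_le: "t \<in> \<T> \<Longrightarrow> v \<in> dual_ball \<Longrightarrow> norm (Aop t v *v y) \<le> T2 \<T> * norm y"
  using onorm[of "(*v) (Aop t v)" y] onorm_le_T2[of t v] by (meson mult_right_mono norm_ge_zero order_trans matrix_vector_mul_bounded_linear)

definition Kq :: "(real,'n) vec \<Rightarrow> real" where
  "Kq x = (\<Sum>(i,j)\<in>{(i,j::'n). i < j}. \<bar>x $ i * x $ j\<bar> * M)"

lemma q_bound: "t \<in> \<T> \<Longrightarrow> norm (qf t x) \<le> Kq x"
proof -
  assume t: "t \<in> \<T>"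
  have "norm (qf t x) \<le> (\<Sum>(i,j)\<in>{(i,j::'n). i < j}. norm ((x $ i * x $ j) *\<^sub>R t i j))"
    unfolding qf_def case_prod_beta by (rule norm_sum)
  also have "\<dots> \<le> Kq x" unfolding Kq_def case_prod_beta
    by (intro sum_mono) (use Mb[OF t] in \<open>auto intro: mult_left_mono\<close>)
  finally show ?thesis .
qed

lemma bdd_q: "bdd_above ((\<lambda>t. norm (qf t x)) ` \<T>)"
  using q_bound by (auto intro!: bdd_aboveI)

lemma f_ge: "t \<in> \<T> \<Longrightarrow> norm (qf t x) \<le> fT \<T> x"
  unfolding fT_eq by (rule cSUP_upper[OF _ bdd_q])

lemma f_approx: "0 < e \<Longrightarrow> \<exists>t\<in>\<T>. fT \<T> x - e < norm (qf t x)"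
proof -
  assume "0 < e"
  hence "fT \<T> x - e < (SUP t\<in>\<T>. norm (qf t x))" unfolding fT_eq by simp
  thus ?thesis using less_cSUP_iff[OF Tne bdd_q, THEN iffD1] by blast
qed

end

lemma pair_sum_eq:
  fixes F :: "'n::{finite,linorder} \<Rightarrow> 'n \<Rightarrow> 'c::comm_monoid_add"
  shows "(\<Sum>(i,j)\<in>{(i,j). i < j}. F i j) = (\<Sum>i\<in>UNIV. \<Sum>j\<in>UNIV. if i < j then F i j else 0)"
proof -
  have e: "{(i,j). i < j} = {p\<in>UNIV. fst p < snd p}" by auto
  have "(\<Sum>(i,j)\<in>{(i,j). i < j}. F i j) = (\<Sum>p\<in>{p\<in>UNIV. fst p < snd p}. F (fst p) (snd p))"
    unfolding e case_prod_beta ..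
  also have "\<dots> = (\<Sum>p\<in>UNIV. if fst p < snd p then F (fst p) (snd p) else 0)"
    by (rule sum.inter_filter) simp
  also have "\<dots> = (\<Sum>i\<in>UNIV. \<Sum>j\<in>UNIV. if i < j then F i j else 0)"
    by (subst sum.cartesian_product) (simp add: case_prod_beta)
  finally show ?thesis .
qed

lemma q_diff:
  fixes t :: "'n::{finite,linorder} \<Rightarrow> 'n \<Rightarrow> 'b::real_normed_vector"
  assumes z: "\<And>j. j \<noteq> i \<Longrightarrow> z $ j = x $ j"
  shows "qf t x - qf t z = (x $ i - z $ i) *\<^sub>R (\<Sum>j\<in>UNIV. x $ j *\<^sub>R ext_fam t i j)"
proof -
  define c where "c = x $ i - z $ i"
  define A where "A l = (if i < l then c *\<^sub>R (x $ l *\<^sub>R t i l) else 0)" for l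
  define B where "B k = (if k < i then c *\<^sub>R (x $ k *\<^sub>R t k i) else 0)" for k
  have pw: "(if k < l then (x $ k * x $ l) *\<^sub>R t k l - (z $ k * z $ l) *\<^sub>R t k l else 0)
      = (if k = i then A l else 0) + (if l = i then B k else 0)" for k l
  proof (cases "k = i")
    case True
    show ?thesis
    proof (cases "i < l")
      case True
      hence "l \<noteq> i" by simp
      have e1: "x $ l * (x $ i - z $ i) = x $ i * x $ l - x $ l * z $ i" by (simp add: algebra_simps)
      show ?thesis using \<open>l \<noteq> i\<close> \<open>k = i\<close> True z[of l] unfolding A_def B_def c_def
        by (simp add: scaleR_scaleR e1 scaleR_diff_left mult.commute)
    next
      case False thus ?thesis using \<open>k = i\<close> unfolding A_def B_def by auto
    qed
  next
    case False
    show ?thesis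
    proof (cases "l = i")
      case True
      have e2: "x $ k * (x $ i - z $ i) = x $ k * x $ i - x $ k * z $ i" by (simp add: algebra_simps)
      show ?thesis using True \<open>k \<noteq> i\<close> z[of k] unfolding A_def B_def c_def
        by (simp add: scaleR_scaleR e2 scaleR_diff_left mult.commute)
    next
      case False
      thus ?thesis using \<open>k \<noteq> i\<close> z[of k] z[of l] unfolding A_def B_def by simp
    qed
  qed
  have "qf t x - qf t z = (\<Sum>k\<in>UNIV. \<Sum>l\<in>UNIV. if k < l then (x $ k * x $ l) *\<^sub>R t k l - (z $ k * z $ l) *\<^sub>R t k l else 0)"
  proof -
    have "qf t x - qf t z = (\<Sum>k\<in>UNIV. \<Sum>l\<in>UNIV. (if k < l then (x $ k * x $ l) *\<^sub>R t k l else 0) - (if k < l then (z $ k * z $ l) *\<^sub>R t k l else 0))"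
      unfolding qf_def pair_sum_eq[of "\<lambda>i j. (x $ i * x $ j) *\<^sub>R t i j"] pair_sum_eq[of "\<lambda>i j. (z $ i * z $ j) *\<^sub>R t i j"]
      by (simp only: sum_subtractf)
    also have "\<dots> = (\<Sum>k\<in>UNIV. \<Sum>l\<in>UNIV. if k < l then (x $ k * x $ l) *\<^sub>R t k l - (z $ k * z $ l) *\<^sub>R t k l else 0)"
      by (intro sum.cong refl) simp
    finally show ?thesis .
  qed
  also have "\<dots> = (\<Sum>k\<in>UNIV. \<Sum>l\<in>UNIV. (if k = i then A l else 0) + (if l = i then B k else 0))"
    using pw by simp
  also have "\<dots> = (\<Sum>l\<in>UNIV. A l) + (\<Sum>k\<in>UNIV. B k)"
  proof -
    have 1: "(\<Sum>k\<in>UNIV. \<Sum>l\<in>UNIV. if k = i then A l else 0) = (\<Sum>k\<in>UNIV. if k = i then sum A UNIV else 0)"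
      by (intro sum.cong refl) auto
    have 2: "(\<Sum>k\<in>UNIV. \<Sum>l\<in>UNIV. if l = i then B k else 0) = (\<Sum>k\<in>UNIV. B k)"
      by (intro sum.cong refl) auto
    show ?thesis by (simp only: sum.distrib 1 2) simp
  qed
  also have "\<dots> = c *\<^sub>R (\<Sum>j\<in>UNIV. x $ j *\<^sub>R ext_fam t i j)"
  proof -
    have "(\<Sum>j\<in>UNIV. x $ j *\<^sub>R ext_fam t i j) = (\<Sum>j\<in>UNIV. (if i < j then x $ j *\<^sub>R t i j else 0) + (if j < i then x $ j *\<^sub>R t j i else 0))"
      unfolding ext_fam_def by (intro sum.cong refl) auto
    moreover have "(\<Sum>l\<in>UNIV. A l) = c *\<^sub>R (\<Sum>j\<in>UNIV. if i < j then x $ j *\<^sub>R t i j else 0)"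
      unfolding A_def scaleR_sum_right by (intro sum.cong refl) auto
    moreover have "(\<Sum>k\<in>UNIV. B k) = c *\<^sub>R (\<Sum>j\<in>UNIV. if j < i then x $ j *\<^sub>R t j i else 0)"
      unfolding B_def scaleR_sum_right by (intro sum.cong refl) auto
    ultimately show ?thesis by (simp add: scaleR_add_right sum.distrib)
  qed
  finally show ?thesis unfolding c_def .
qed

context conc
begin

lemma cond_support:
  assumes x: "x \<in> set_pmf \<mu>" and z: "z \<in> set_pmf (cond_pmf \<mu> (cset i x))"
  shows "z \<in> set_pmf \<mu>" "\<And>j. j \<noteq> i \<Longrightarrow> z $ j = x $ j"
  using z set_cond_cset[OF x] by auto

lemma coord_diff: "x \<in> set_pmf \<mu> \<Longrightarrow> z \<in> set_pmf \<mu> \<Longrightarrow> \<bar>x $ i - z $ i\<bar> \<le> b - a"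
  using coord[of x i] coord[of z i] by auto

lemma Gam_bound:
  assumes x: "x \<in> set_pmf \<mu>" and D: "0 \<le> D" and K: "0 \<le> K"
    and H: "\<And>e. 0 < e \<Longrightarrow> \<exists>r. (\<Sum>i\<in>UNIV. (r i)\<^sup>2) \<le> R \<and> (\<forall>i. \<bar>r i\<bar> \<le> K) \<and>
              (\<forall>i z. z \<in> set_pmf \<mu> \<longrightarrow> (\<forall>j. j \<noteq> i \<longrightarrow> z $ j = x $ j) \<longrightarrow> g x - g z \<le> e + D * \<bar>r i\<bar>)"
  shows "Gam \<mu> g x \<le> D\<^sup>2 * R"
proof (rule field_le_epsilon)
  fix e :: real assume e: "0 < e"
  define C where "C = real (CARD('n)) * (2 * D * K + 1)"
  have C: "0 \<le> C" unfolding C_def using D K by simp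
  define e' where "e' = min 1 (e / (C + 1))"
  have e': "0 < e'" "e' \<le> 1" "e' * C \<le> e"
  proof -
    show "0 < e'" unfolding e'_def using e C by simp
    show "e' \<le> 1" unfolding e'_def by simp
    have "e' * C \<le> e / (C + 1) * C" unfolding e'_def using C by (intro mult_right_mono) auto
    also have "\<dots> \<le> e" using e C by (simp add: field_simps)
    finally show "e' * C \<le> e" .
  qed
  obtain r where r: "(\<Sum>i\<in>UNIV. (r i)\<^sup>2) \<le> R" "\<And>i. \<bar>r i\<bar> \<le> K"
    "\<And>i z. z \<in> set_pmf \<mu> \<Longrightarrow> (\<forall>j. j \<noteq> i \<longrightarrow> z $ j = x $ j) \<Longrightarrow> g x - g z \<le> e' + D * \<bar>r i\<bar>"
    using H[OF e'(1)] by blast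
  have each: "measure_pmf.expectation (cond_pmf \<mu> (cset i x)) (\<lambda>z. (max (g x - g z) 0)\<^sup>2)
      \<le> (e' + D * \<bar>r i\<bar>)\<^sup>2" for i
  proof (rule E_le_const[OF fin_cond[OF fin x]])
    fix z assume zc: "z \<in> set_pmf (cond_pmf \<mu> (cset i x))"
    have zz1: "z \<in> set_pmf \<mu>" by (rule cond_support(1)[OF x zc])
    have zz2: "\<forall>j. j \<noteq> i \<longrightarrow> z $ j = x $ j" using cond_support(2)[OF x zc] by blast
    have g1: "g x - g z \<le> e' + D * \<bar>r i\<bar>" by (rule r(3)[OF zz1 zz2])
    have g2: "0 \<le> e' + D * \<bar>r i\<bar>" using e'(1) D by simp
    have "max (g x - g z) 0 \<le> e' + D * \<bar>r i\<bar>" using g1 g2 by (rule max.boundedI)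
    thus "(max (g x - g z) 0)\<^sup>2 \<le> (e' + D * \<bar>r i\<bar>)\<^sup>2" by (rule power_mono) simp
  qed
  have sq: "(e' + D * \<bar>r i\<bar>)\<^sup>2 \<le> D\<^sup>2 * (r i)\<^sup>2 + e' * (2 * D * K + 1)" for i
  proof -
    have "(e' + D * \<bar>r i\<bar>)\<^sup>2 = e' * e' + e' * (2 * D * \<bar>r i\<bar>) + D\<^sup>2 * (r i)\<^sup>2"
      by (simp add: power2_eq_square algebra_simps)
    also have "e' * e' \<le> e' * 1" using e' by (intro mult_left_mono) auto
    also have "e' * (2 * D * \<bar>r i\<bar>) \<le> e' * (2 * D * K)" using e' D r(2)[of i] by (intro mult_left_mono) auto
    finally show ?thesis by (simp add: algebra_simps)
  qed
  have "Gam \<mu> g x \<le> (\<Sum>i\<in>UNIV. D\<^sup>2 * (r i)\<^sup>2 + e' * (2 * D * K + 1))"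
    unfolding Gam_def by (intro sum_mono order_trans[OF each sq])
  also have "\<dots> = D\<^sup>2 * (\<Sum>i\<in>UNIV. (r i)\<^sup>2) + e' * C"
    unfolding C_def by (simp add: sum.distrib sum_distrib_left algebra_simps)
  also have "\<dots> \<le> D\<^sup>2 * R + e" using r(1) e'(3) by (intro add_mono mult_left_mono) auto
  finally show "Gam \<mu> g x \<le> D\<^sup>2 * R + e" .
qed

end

lemma inner_Adiff:
  fixes A :: "((real,'n::finite) vec, 'n) vec"
  assumes sym: "\<And>k j. A $ k $ j = A $ j $ k" and z: "\<And>j. j \<noteq> i \<Longrightarrow> z $ j = x $ j"
  shows "inner u (A *v x - A *v z) = (x $ i - z $ i) * (A *v u) $ i"
proof -
  have comp: "(A *v x - A *v z) $ k = A $ k $ i * (x $ i - z $ i)" for k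
  proof -
    have "(A *v x - A *v z) $ k = (\<Sum>j\<in>UNIV. A $ k $ j * (x $ j - z $ j))"
      unfolding matrix_vector_mult_def by (simp add: sum_subtractf right_diff_distrib)
    also have "\<dots> = (\<Sum>j\<in>UNIV. if j = i then A $ k $ i * (x $ i - z $ i) else 0)"
      by (intro sum.cong refl) (use z in auto)
    finally show ?thesis by simp
  qed
  have "inner u (A *v x - A *v z) = (\<Sum>k\<in>UNIV. u $ k * (A $ k $ i * (x $ i - z $ i)))"
    unfolding inner_vec_def comp by simp
  also have "\<dots> = (x $ i - z $ i) * (\<Sum>k\<in>UNIV. A $ i $ k * u $ k)"
    by (simp add: sum_distrib_left sym mult_ac)
  also have "\<dots> = (x $ i - z $ i) * (A *v u) $ i"
    unfolding matrix_vector_mult_def by simp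
  finally show ?thesis .
qed

lemma norm_sq_vec: "(norm (w :: (real,'n::finite) vec))\<^sup>2 = (\<Sum>i\<in>UNIV. (w $ i)\<^sup>2)"
  unfolding power2_norm_eq_inner inner_vec_def by (simp add: power2_eq_square)

context conc
begin

lemma gradW:
  assumes x: "x \<in> set_pmf \<mu>"
  shows "Gam \<mu> (Wf \<T>) x \<le> (b - a)\<^sup>2 * (T2 \<T>)\<^sup>2"
proof (rule Gam_bound[OF x])
  show "0 \<le> b - a" using ab by simp
  show "0 \<le> T2 \<T>" by (rule T2_nonneg)
next
  fix e :: real assume e: "0 < e"
  obtain t v where tv: "t \<in> \<T>" "v \<in> dual_ball" "Wf \<T> x - e < Wv t v x"
    using W_approx[OF e, of x] by blast
  define A where "A = Aop t v"
  have Asym: "A $ k $ j = A $ j $ k" for k j unfolding A_def by (rule Aop_sym)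
  define y where "y = A *v x"
  have Wvy: "Wv t v x = norm y" unfolding y_def A_def by (rule Wv_norm)
  have Wz: "norm (A *v z) \<le> Wf \<T> z" for z
    using W_ge[OF tv(1,2), of z] Wv_norm[of t v z] unfolding A_def by simp
  show "\<exists>r. (\<Sum>i\<in>UNIV. (r i)\<^sup>2) \<le> (T2 \<T>)\<^sup>2 \<and> (\<forall>i. \<bar>r i\<bar> \<le> T2 \<T>) \<and>
      (\<forall>i z. z \<in> set_pmf \<mu> \<longrightarrow> (\<forall>j. j \<noteq> i \<longrightarrow> z $ j = x $ j) \<longrightarrow> Wf \<T> x - Wf \<T> z \<le> e + (b - a) * \<bar>r i\<bar>)"
  proof (cases "y = 0")
    case True
    show ?thesis
    proof (rule exI[of _ "\<lambda>i. 0"], intro conjI allI impI)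
      show "(\<Sum>i\<in>UNIV. ((\<lambda>i. 0::real) i)\<^sup>2) \<le> (T2 \<T>)\<^sup>2" by simp
      show "\<bar>(\<lambda>i. 0::real) i\<bar> \<le> T2 \<T>" for i using T2_nonneg by simp
      fix i z
      have "Wf \<T> x - e < 0" using tv(3) Wvy True by simp
      moreover have "0 \<le> Wf \<T> z" by (rule W_nonneg)
      ultimately show "Wf \<T> x - Wf \<T> z \<le> e + (b - a) * \<bar>(\<lambda>i. 0::real) i\<bar>" by simp
    qed
  next
    case False
    define u where "u = (1 / norm y) *\<^sub>R y"
    have nu: "norm u = 1" unfolding u_def using False by simp
    have iu: "inner u y = norm y" unfolding u_def using False
      by (simp add: power2_norm_eq_inner[symmetric] power2_eq_square)
    define r where "r i = (A *v u) $ i" for i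
    have Au: "norm (A *v u) \<le> T2 \<T>" using Aop_norm_le[OF tv(1,2), of u] nu unfolding A_def by simp
    show ?thesis
    proof (rule exI[of _ r], intro conjI allI impI)
      have "(\<Sum>i\<in>UNIV. (r i)\<^sup>2) = (norm (A *v u))\<^sup>2" unfolding r_def norm_sq_vec ..
      also have "\<dots> \<le> (T2 \<T>)\<^sup>2" using Au by (intro power_mono) auto
      finally show "(\<Sum>i\<in>UNIV. (r i)\<^sup>2) \<le> (T2 \<T>)\<^sup>2" .
      show "\<bar>r i\<bar> \<le> T2 \<T>" for i unfolding r_def using component_le_norm_cart[of "A *v u" i] Au by simp
      fix i z assume z: "z \<in> set_pmf \<mu>" "\<forall>j. j \<noteq> i \<longrightarrow> z $ j = x $ j"
      have "inner u (A *v z) \<le> norm u * norm (A *v z)" by (rule norm_cauchy_schwarz)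
      hence iz: "inner u (A *v z) \<le> Wf \<T> z" using nu Wz[of z] by simp
      have "Wf \<T> x - Wf \<T> z < e + (inner u y - inner u (A *v z))"
        using tv(3) Wvy iu iz by simp
      also have "inner u y - inner u (A *v z) = inner u (A *v x - A *v z)"
        unfolding y_def by (simp add: inner_diff_right)
      also have "\<dots> = (x $ i - z $ i) * r i"
        unfolding r_def by (rule inner_Adiff[OF Asym]) (use z in auto)
      also have "\<dots> \<le> \<bar>x $ i - z $ i\<bar> * \<bar>r i\<bar>" by (simp add: abs_mult[symmetric])
      also have "\<dots> \<le> (b - a) * \<bar>r i\<bar>" using coord_diff[OF x z(1), of i] by (intro mult_right_mono) auto
      finally show "Wf \<T> x - Wf \<T> z \<le> e + (b - a) * \<bar>r i\<bar>" by simp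
    qed
  qed
qed

lemma gradf:
  assumes x: "x \<in> set_pmf \<mu>"
  shows "Gam \<mu> (fT \<T>) x \<le> (b - a)\<^sup>2 * (Wf \<T> x)\<^sup>2"
proof (rule Gam_bound[OF x])
  show "0 \<le> b - a" using ab by simp
  show "0 \<le> (\<Sum>j\<in>UNIV. \<bar>x $ j\<bar> * M)" using M_nonneg by (simp add: sum_nonneg)
next
  fix e :: real assume e: "0 < e"
  obtain t where t: "t \<in> \<T>" "fT \<T> x - e < norm (qf t x)" using f_approx[OF e] by blast
  obtain v where v: "norm v \<le> 1" "blinfun_apply v (qf t x) = norm (qf t x)"
    using hahn_banach_norming[of "qf t x"] by blast
  have vd: "v \<in> dual_ball" unfolding dual_ball_def using v(1) by simp
  define r where "r i = (\<Sum>j\<in>UNIV. x $ j * blinfun_apply v (ext_fam t i j))" for i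
  show "\<exists>r. (\<Sum>i\<in>UNIV. (r i)\<^sup>2) \<le> (Wf \<T> x)\<^sup>2 \<and> (\<forall>i. \<bar>r i\<bar> \<le> (\<Sum>j\<in>UNIV. \<bar>x $ j\<bar> * M)) \<and>
      (\<forall>i z. z \<in> set_pmf \<mu> \<longrightarrow> (\<forall>j. j \<noteq> i \<longrightarrow> z $ j = x $ j) \<longrightarrow> fT \<T> x - fT \<T> z \<le> e + (b - a) * \<bar>r i\<bar>)"
  proof (rule exI[of _ r], intro conjI allI impI)
    have "(\<Sum>i\<in>UNIV. (r i)\<^sup>2) = (Wv t v x)\<^sup>2"
      unfolding Wv_def r_def by (simp add: sum_nonneg)
    also have "\<dots> \<le> (Wf \<T> x)\<^sup>2" using W_ge[OF t(1) vd, of x] Wv_nonneg[of t v x] by (intro power_mono) auto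
    finally show "(\<Sum>i\<in>UNIV. (r i)\<^sup>2) \<le> (Wf \<T> x)\<^sup>2" .
    show "\<bar>r i\<bar> \<le> (\<Sum>j\<in>UNIV. \<bar>x $ j\<bar> * M)" for i unfolding r_def by (rule row_bound[OF t(1) vd])
    fix i z assume z: "z \<in> set_pmf \<mu>" "\<forall>j. j \<noteq> i \<longrightarrow> z $ j = x $ j"
    have vz: "blinfun_apply v (qf t z) \<le> fT \<T> z"
    proof -
      have "blinfun_apply v (qf t z) \<le> norm v * norm (qf t z)"
        using norm_blinfun[of v "qf t z"] by simp
      also have "\<dots> \<le> 1 * norm (qf t z)" using v(1) by (intro mult_right_mono) auto
      also have "\<dots> \<le> fT \<T> z" using f_ge[OF t(1)] by simp
      finally show ?thesis .
    qed
    have "fT \<T> x - fT \<T> z < e + (blinfun_apply v (qf t x) - blinfun_apply v (qf t z))"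
      using t(2) v(2) vz by simp
    also have "blinfun_apply v (qf t x) - blinfun_apply v (qf t z) = blinfun_apply v (qf t x - qf t z)"
      by (simp add: blinfun.diff_right)
    also have "qf t x - qf t z = (x $ i - z $ i) *\<^sub>R (\<Sum>j\<in>UNIV. x $ j *\<^sub>R ext_fam t i j)"
      by (rule q_diff) (use z in auto)
    also have "blinfun_apply v \<dots> = (x $ i - z $ i) * r i"
      unfolding r_def by (simp add: blinfun.scaleR_right blinfun.sum_right)
    also have "\<dots> \<le> \<bar>x $ i - z $ i\<bar> * \<bar>r i\<bar>" by (simp add: abs_mult[symmetric])
    also have "\<dots> \<le> (b - a) * \<bar>r i\<bar>" using coord_diff[OF x z(1), of i] by (intro mult_right_mono) auto
    finally show "fT \<T> x - fT \<T> z \<le> e + (b - a) * \<bar>r i\<bar>" by simp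
  qed
qed

lemma sq_diff_bound:
  fixes p q :: real
  assumes "0 \<le> p" "0 \<le> q"
  shows "(max (p\<^sup>2 - q\<^sup>2) 0)\<^sup>2 \<le> 4 * p\<^sup>2 * (max (p - q) 0)\<^sup>2"
proof (cases "p \<le> q")
  case True
  hence "p\<^sup>2 \<le> q\<^sup>2" using assms by (intro power_mono) auto
  thus ?thesis by simp
next
  case False
  have "p\<^sup>2 - q\<^sup>2 = (p - q) * (p + q)" by (simp add: power2_eq_square algebra_simps)
  also have "\<dots> \<le> (p - q) * (2 * p)" using False assms by (intro mult_left_mono) auto
  finally have h: "p\<^sup>2 - q\<^sup>2 \<le> (p - q) * (2 * p)" .
  have h0: "0 \<le> p\<^sup>2 - q\<^sup>2" using False assms by (simp add: power_mono)
  have "(max (p\<^sup>2 - q\<^sup>2) 0)\<^sup>2 = (p\<^sup>2 - q\<^sup>2)\<^sup>2" using h0 by simp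
  also have "\<dots> \<le> ((p - q) * (2 * p))\<^sup>2" using h h0 by (intro power_mono) auto
  also have "\<dots> = 4 * p\<^sup>2 * (max (p - q) 0)\<^sup>2" using False by (simp add: power2_eq_square)
  finally show ?thesis .
qed

lemma gradW2:
  assumes x: "x \<in> set_pmf \<mu>"
  shows "Gam \<mu> (\<lambda>y. (Wf \<T> y)\<^sup>2) x \<le> 4 * (Wf \<T> x)\<^sup>2 * ((b - a)\<^sup>2 * (T2 \<T>)\<^sup>2)"
proof -
  have "Gam \<mu> (\<lambda>y. (Wf \<T> y)\<^sup>2) x \<le> (\<Sum>i\<in>UNIV. 4 * (Wf \<T> x)\<^sup>2 *
      measure_pmf.expectation (cond_pmf \<mu> (cset i x)) (\<lambda>z. (max (Wf \<T> x - Wf \<T> z) 0)\<^sup>2))"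
    unfolding Gam_def
  proof (rule sum_mono)
    fix i
    have fn: "finite (set_pmf (cond_pmf \<mu> (cset i x)))" by (rule fin_cond[OF fin x])
    have "measure_pmf.expectation (cond_pmf \<mu> (cset i x)) (\<lambda>z. (max ((Wf \<T> x)\<^sup>2 - (Wf \<T> z)\<^sup>2) 0)\<^sup>2)
        \<le> measure_pmf.expectation (cond_pmf \<mu> (cset i x)) (\<lambda>z. 4 * (Wf \<T> x)\<^sup>2 * (max (Wf \<T> x - Wf \<T> z) 0)\<^sup>2)"
      by (rule E_mono[OF fn]) (rule sq_diff_bound[OF W_nonneg W_nonneg])
    also have "\<dots> = 4 * (Wf \<T> x)\<^sup>2 * measure_pmf.expectation (cond_pmf \<mu> (cset i x)) (\<lambda>z. (max (Wf \<T> x - Wf \<T> z) 0)\<^sup>2)"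
      by (rule E_cmult[OF fn])
    finally show "measure_pmf.expectation (cond_pmf \<mu> (cset i x)) (\<lambda>z. (max ((Wf \<T> x)\<^sup>2 - (Wf \<T> z)\<^sup>2) 0)\<^sup>2)
        \<le> 4 * (Wf \<T> x)\<^sup>2 * measure_pmf.expectation (cond_pmf \<mu> (cset i x)) (\<lambda>z. (max (Wf \<T> x - Wf \<T> z) 0)\<^sup>2)" .
  qed
  also have "\<dots> = 4 * (Wf \<T> x)\<^sup>2 * Gam \<mu> (Wf \<T>) x" unfolding Gam_def by (simp add: sum_distrib_left)
  also have "\<dots> \<le> 4 * (Wf \<T> x)\<^sup>2 * ((b - a)\<^sup>2 * (T2 \<T>)\<^sup>2)" by (intro mult_left_mono gradW[OF x]) auto
  finally show ?thesis .
qed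

end

lemma young_pt:
  fixes u v :: real
  assumes "0 < u"
  shows "u * v \<le> u * ln u - u + exp v"
proof -
  have "exp (v - ln u) \<ge> 1 + (v - ln u)" by (rule exp_ge_add_one_self)
  hence "exp v / u \<ge> 1 + v - ln u" using assms by (simp add: exp_diff)
  hence "exp v \<ge> u * (1 + v - ln u)" using assms by (simp add: field_simps)
  thus ?thesis by (simp add: algebra_simps)
qed

lemma young:
  fixes \<mu> :: "'a pmf" and h Y :: "'a \<Rightarrow> real"
  assumes fin: "finite (set_pmf \<mu>)" and hpos: "\<And>x. 0 < h x"
  shows "measure_pmf.expectation \<mu> (\<lambda>x. Y x * h x) \<le>
    ent \<mu> h + measure_pmf.expectation \<mu> h * ln (measure_pmf.expectation \<mu> (\<lambda>x. exp (Y x)))"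
proof -
  define Z where "Z = measure_pmf.expectation \<mu> h"
  define Q where "Q = measure_pmf.expectation \<mu> (\<lambda>x. exp (Y x))"
  define L where "L = ln Q"
  obtain x0 where x0: "x0 \<in> set_pmf \<mu>" using set_pmf_not_empty[of \<mu>] by blast
  have Zpos: "0 < Z" unfolding Z_def E_sum[OF fin]
    by (rule sum_pos2[OF fin x0]) (use x0 hpos in \<open>auto simp: pmf_positive intro: mult_nonneg_nonneg less_imp_le\<close>)
  have Qpos: "0 < Q" unfolding Q_def E_sum[OF fin]
    by (rule sum_pos2[OF fin x0]) (use x0 in \<open>auto simp: pmf_positive\<close>)
  have eL: "exp L = Q" unfolding L_def using Qpos by simp
  have pw: "h x * (Y x - L) \<le> h x * ln (h x) - h x * ln Z - h x + Z / Q * exp (Y x)" for x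
  proof -
    have "(h x / Z) * (Y x - L) \<le> (h x / Z) * ln (h x / Z) - h x / Z + exp (Y x - L)"
      by (rule young_pt) (use hpos Zpos in simp)
    hence "Z * ((h x / Z) * (Y x - L)) \<le> Z * ((h x / Z) * ln (h x / Z) - h x / Z + exp (Y x - L))"
      using Zpos by (intro mult_left_mono) auto
    moreover have "Z * ((h x / Z) * (Y x - L)) = h x * (Y x - L)" using Zpos by simp
    moreover have "Z * ((h x / Z) * ln (h x / Z) - h x / Z + exp (Y x - L)) =
        h x * ln (h x) - h x * ln Z - h x + Z / Q * exp (Y x)"
      using Zpos hpos[of x] eL by (simp add: ln_div exp_diff field_simps)
    ultimately show ?thesis by simp
  qed
  have "measure_pmf.expectation \<mu> (\<lambda>x. Y x * h x) = measure_pmf.expectation \<mu> (\<lambda>x. h x * (Y x - L)) + L * Z"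
  proof -
    have "measure_pmf.expectation \<mu> (\<lambda>x. Y x * h x) = measure_pmf.expectation \<mu> (\<lambda>x. h x * (Y x - L) + L * h x)"
      by (intro E_cong[OF fin]) (simp add: algebra_simps)
    also have "\<dots> = measure_pmf.expectation \<mu> (\<lambda>x. h x * (Y x - L)) + L * Z"
      unfolding E_add[OF fin] E_cmult[OF fin] Z_def ..
    finally show ?thesis .
  qed
  also have "measure_pmf.expectation \<mu> (\<lambda>x. h x * (Y x - L)) \<le>
      measure_pmf.expectation \<mu> (\<lambda>x. h x * ln (h x) - h x * ln Z - h x + Z / Q * exp (Y x))"
    by (rule E_mono[OF fin pw])
  also have "measure_pmf.expectation \<mu> (\<lambda>x. h x * ln (h x) - h x * ln Z - h x + Z / Q * exp (Y x))
      = measure_pmf.expectation \<mu> (\<lambda>x. h x * ln (h x)) - Z * ln Z - Z + Z"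
  proof -
    have "measure_pmf.expectation \<mu> (\<lambda>x. h x * ln (h x) - h x * ln Z - h x + Z / Q * exp (Y x))
      = (\<Sum>x\<in>set_pmf \<mu>. pmf \<mu> x * (h x * ln (h x))) - (\<Sum>x\<in>set_pmf \<mu>. pmf \<mu> x * h x) * ln Z
        - (\<Sum>x\<in>set_pmf \<mu>. pmf \<mu> x * h x) + Z / Q * (\<Sum>x\<in>set_pmf \<mu>. pmf \<mu> x * exp (Y x))"
      unfolding E_sum[OF fin]
      by (simp add: algebra_simps sum.distrib sum_subtractf sum_distrib_left sum_distrib_right)
    also have "\<dots> = measure_pmf.expectation \<mu> (\<lambda>x. h x * ln (h x)) - Z * ln Z - Z + Z"
      unfolding Z_def Q_def E_sum[OF fin] using Qpos unfolding Q_def E_sum[OF fin] by simp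
    finally show ?thesis .
  qed
  finally have "measure_pmf.expectation \<mu> (\<lambda>x. Y x * h x) \<le>
      measure_pmf.expectation \<mu> (\<lambda>x. h x * ln (h x)) - Z * ln Z + L * Z" by simp
  moreover have "ent \<mu> h = measure_pmf.expectation \<mu> (\<lambda>x. h x * ln (h x)) - Z * ln Z"
  proof -
    have "measure_pmf.expectation \<mu> (\<lambda>x. xlogx (h x)) = measure_pmf.expectation \<mu> (\<lambda>x. h x * ln (h x))"
      by (intro E_cong[OF fin]) (use hpos in \<open>simp add: xlogx_def less_imp_neq[symmetric]\<close>)
    moreover have "xlogx Z = Z * ln Z" using Zpos by (simp add: xlogx_def)
    ultimately show ?thesis unfolding ent_def Z_def by simp
  qed
  ultimately show ?thesis unfolding Z_def[symmetric] Q_def[symmetric] L_def by (simp add: mult.commute)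
qed

lemma sq_exp_bound:
  fixes s y :: real
  assumes "0 < s"
  shows "(max y 0)\<^sup>2 \<le> 4 / s\<^sup>2 * exp (s * y)"
proof (cases "y \<le> 0")
  case True thus ?thesis by simp
next
  case False
  define u where "u = s * y"
  have u: "0 < u" unfolding u_def using False assms by simp
  have "1 + u / 2 \<le> exp (u / 2)" by (rule exp_ge_add_one_self)
  hence "u / 2 \<le> exp (u / 2)" by linarith
  hence "(u / 2)\<^sup>2 \<le> (exp (u / 2))\<^sup>2" using u by (intro power_mono) auto
  also have "(exp (u / 2))\<^sup>2 = exp u" by (simp add: power2_eq_square exp_add[symmetric])
  finally have "u\<^sup>2 \<le> 4 * exp u" by (simp add: power_divide)
  hence "s\<^sup>2 * y\<^sup>2 \<le> 4 * exp (s * y)" unfolding u_def by (simp add: power_mult_distrib)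
  hence "y\<^sup>2 \<le> 4 / s\<^sup>2 * exp (s * y)" using assms by (simp add: field_simps)
  thus ?thesis using False by simp
qed

lemma exp_half_lt_2: "exp (1/2 :: real) < 2"
proof -
  have "exp (1/2 :: real) * exp (1/2) = exp 1" by (simp add: exp_add[symmetric])
  also have "\<dots> \<le> 3" by (rule exp_le)
  finally have h: "exp (1/2 :: real) * exp (1/2) \<le> 3" .
  show ?thesis
  proof (rule ccontr)
    assume "\<not> exp (1/2 :: real) < 2"
    hence "2 \<le> exp (1/2 :: real)" by simp
    hence "2 * 2 \<le> exp (1/2 :: real) * exp (1/2)" by (intro mult_mono) auto
    thus False using h by simp
  qed
qed

context conc
begin

abbreviation "cc \<equiv> (b - a)\<^sup>2 * \<sigma>\<^sup>2"

lemma cc_nonneg: "0 \<le> cc" by simp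

lemma W_ent:
  assumes s: "0 < s"
  shows "ent \<mu> (\<lambda>x. exp (s * Wf \<T> x)) \<le> (cc * (T2 \<T>)\<^sup>2 / 2) * s\<^sup>2 * MGF \<mu> (Wf \<T>) s"
proof -
  have "ent \<mu> (\<lambda>x. exp (s * Wf \<T> x)) \<le> \<sigma>\<^sup>2 * s\<^sup>2 / 2 * measure_pmf.expectation \<mu> (\<lambda>x. exp (s * Wf \<T> x) * Gam \<mu> (Wf \<T>) x)"
    using engine[OF fin lsi, of s "Wf \<T>"] s by simp
  also have "measure_pmf.expectation \<mu> (\<lambda>x. exp (s * Wf \<T> x) * Gam \<mu> (Wf \<T>) x) \<le>
      measure_pmf.expectation \<mu> (\<lambda>x. ((b - a)\<^sup>2 * (T2 \<T>)\<^sup>2) * exp (s * Wf \<T> x))"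
  proof (rule E_mono[OF fin])
    fix x assume x: "x \<in> set_pmf \<mu>"
    have "exp (s * Wf \<T> x) * Gam \<mu> (Wf \<T>) x \<le> exp (s * Wf \<T> x) * ((b - a)\<^sup>2 * (T2 \<T>)\<^sup>2)"
      by (rule mult_left_mono[OF gradW[OF x]]) simp
    thus "exp (s * Wf \<T> x) * Gam \<mu> (Wf \<T>) x \<le> ((b - a)\<^sup>2 * (T2 \<T>)\<^sup>2) * exp (s * Wf \<T> x)"
      by (simp add: mult.commute)
  qed
  also have "\<dots> = ((b - a)\<^sup>2 * (T2 \<T>)\<^sup>2) * MGF \<mu> (Wf \<T>) s"
    unfolding MGF_def by (rule E_cmult[OF fin])
  finally have "ent \<mu> (\<lambda>x. exp (s * Wf \<T> x)) \<le> \<sigma>\<^sup>2 * s\<^sup>2 / 2 * (((b - a)\<^sup>2 * (T2 \<T>)\<^sup>2) * MGF \<mu> (Wf \<T>) s)"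
    by (simp add: mult_left_mono)
  thus ?thesis by (simp add: algebra_simps)
qed

lemma W_mgf:
  assumes s: "0 < s"
  shows "ln (MGF \<mu> (Wf \<T>) s) \<le> s * T1 \<mu> \<T> + (cc * (T2 \<T>)\<^sup>2 / 2) * s\<^sup>2"
  unfolding T1_eq
proof (rule herbst1[OF fin _ s order_refl])
  fix l :: real assume "0 < l" "l \<le> s"
  thus "ent \<mu> (\<lambda>x. exp (l * Wf \<T> x)) \<le> (cc * (T2 \<T>)\<^sup>2 / 2) * l\<^sup>2 * MGF \<mu> (Wf \<T>) l"
    by (intro W_ent)
qed

lemma W_dev:
  assumes pos: "0 < cc * (T2 \<T>)\<^sup>2"
  shows "measure_pmf.expectation \<mu> (\<lambda>x. (max (Wf \<T> x - T1 \<mu> \<T>) 0)\<^sup>2) \<le> 6 * (cc * (T2 \<T>)\<^sup>2)"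
proof -
  define \<phi> where "\<phi> = cc * (T2 \<T>)\<^sup>2 / 2"
  have \<phi>: "0 < \<phi>" unfolding \<phi>_def using pos by simp
  define s where "s = 1 / sqrt \<phi>"
  have s: "0 < s" unfolding s_def using \<phi> by simp
  have s2: "s\<^sup>2 = 1 / \<phi>" unfolding s_def using \<phi> by (simp add: power_divide)
  define m where "m = T1 \<mu> \<T>"
  have "measure_pmf.expectation \<mu> (\<lambda>x. (max (Wf \<T> x - m) 0)\<^sup>2) \<le>
      measure_pmf.expectation \<mu> (\<lambda>x. 4 / s\<^sup>2 * exp (s * (Wf \<T> x - m)))"
    by (rule E_mono[OF fin]) (rule sq_exp_bound[OF s])
  also have "\<dots> = 4 / s\<^sup>2 * exp (- (s * m)) * MGF \<mu> (Wf \<T>) s"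
  proof -
    have "(\<lambda>x. 4 / s\<^sup>2 * exp (s * (Wf \<T> x - m))) = (\<lambda>x. (4 / s\<^sup>2 * exp (- (s * m))) * exp (s * Wf \<T> x))"
      by (rule ext) (simp add: right_diff_distrib exp_diff exp_minus field_simps)
    thus ?thesis unfolding MGF_def by (simp add: E_cmult[OF fin])
  qed
  also have "MGF \<mu> (Wf \<T>) s \<le> exp (s * m + \<phi> * s\<^sup>2)"
  proof -
    have "MGF \<mu> (Wf \<T>) s = exp (ln (MGF \<mu> (Wf \<T>) s))" using MGF_pos[OF fin] by simp
    also have "\<dots> \<le> exp (s * m + \<phi> * s\<^sup>2)" using W_mgf[OF s] unfolding m_def \<phi>_def by simp
    finally show ?thesis .
  qed
  hence "4 / s\<^sup>2 * exp (- (s * m)) * MGF \<mu> (Wf \<T>) s \<le> 4 / s\<^sup>2 * exp (- (s * m)) * exp (s * m + \<phi> * s\<^sup>2)"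
    using s by (intro mult_left_mono) auto
  also have "\<dots> = 4 * \<phi> * exp 1"
  proof -
    have "- (s * m) + (s * m + \<phi> * s\<^sup>2) = 1" using s2 \<phi> by simp
    hence e: "exp (- (s * m)) * exp (s * m + \<phi> * s\<^sup>2) = exp 1"
      by (subst exp_add[symmetric]) simp
    have "4 / s\<^sup>2 = 4 * \<phi>" using s2 \<phi> by simp
    thus ?thesis using e by (simp add: mult.assoc)
  qed
  also have "\<dots> \<le> 4 * \<phi> * 3" using \<phi> exp_le by (intro mult_left_mono) auto
  also have "\<dots> = 6 * (cc * (T2 \<T>)\<^sup>2)" unfolding \<phi>_def by simp
  finally show ?thesis unfolding m_def .
qed

lemma T1_nonneg: "0 \<le> T1 \<mu> \<T>"
  unfolding T1_eq by (rule E_nonneg[OF fin]) (rule W_nonneg)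

lemma W2_bound:
  assumes pos: "0 < cc * (T2 \<T>)\<^sup>2"
  shows "measure_pmf.expectation \<mu> (\<lambda>x. (Wf \<T> x)\<^sup>2) \<le> 2 * (T1 \<mu> \<T>)\<^sup>2 + 12 * (cc * (T2 \<T>)\<^sup>2)"
proof -
  define m where "m = T1 \<mu> \<T>"
  have m: "0 \<le> m" unfolding m_def by (rule T1_nonneg)
  have pw: "(Wf \<T> x)\<^sup>2 \<le> 2 * m\<^sup>2 + 2 * (max (Wf \<T> x - m) 0)\<^sup>2" for x
  proof (cases "Wf \<T> x \<le> m")
    case True
    hence "(Wf \<T> x)\<^sup>2 \<le> m\<^sup>2" using W_nonneg by (intro power_mono) auto
    moreover have "0 \<le> (max (Wf \<T> x - m) 0)\<^sup>2" by simp
    moreover have "0 \<le> m\<^sup>2" by simp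
    ultimately show ?thesis by linarith
  next
    case False
    define d where "d = Wf \<T> x - m"
    have "(Wf \<T> x)\<^sup>2 = m\<^sup>2 + 2 * m * d + d\<^sup>2" unfolding d_def by (simp add: power2_eq_square algebra_simps)
    also have "2 * m * d \<le> m\<^sup>2 + d\<^sup>2" using sum_squares_bound[of m d] by (simp add: power2_eq_square)
    finally show ?thesis using False unfolding d_def by simp
  qed
  have "measure_pmf.expectation \<mu> (\<lambda>x. (Wf \<T> x)\<^sup>2) \<le>
      measure_pmf.expectation \<mu> (\<lambda>x. 2 * m\<^sup>2 + 2 * (max (Wf \<T> x - m) 0)\<^sup>2)"
    by (rule E_mono[OF fin pw])
  also have "\<dots> = 2 * m\<^sup>2 + 2 * measure_pmf.expectation \<mu> (\<lambda>x. (max (Wf \<T> x - m) 0)\<^sup>2)"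
    by (simp add: E_add[OF fin] E_cmult[OF fin])
  also have "\<dots> \<le> 2 * m\<^sup>2 + 2 * (6 * (cc * (T2 \<T>)\<^sup>2))"
  proof -
    have d: "measure_pmf.expectation \<mu> (\<lambda>x. (max (Wf \<T> x - m) 0)\<^sup>2) \<le> 6 * (cc * (T2 \<T>)\<^sup>2)"
      using W_dev[OF pos] unfolding m_def .
    show ?thesis using d by linarith
  qed
  finally show ?thesis unfolding m_def by simp
qed

lemma W2_mgf:
  assumes pos: "0 < cc * (T2 \<T>)\<^sup>2" and th: "0 < \<theta>" "\<theta> < 1 / (2 * (cc * (T2 \<T>)\<^sup>2))"
  shows "ln (MGF \<mu> (\<lambda>y. (Wf \<T> y)\<^sup>2) \<theta>) \<le>
    \<theta> * measure_pmf.expectation \<mu> (\<lambda>y. (Wf \<T> y)\<^sup>2) / (1 - 2 * (cc * (T2 \<T>)\<^sup>2) * \<theta>)"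
proof (rule herbst2[OF fin _ _ th])
  show "0 < 2 * (cc * (T2 \<T>)\<^sup>2)" using pos by simp
next
  fix t :: real assume t: "0 < t" "t < 1 / (2 * (cc * (T2 \<T>)\<^sup>2))"
  have "ent \<mu> (\<lambda>x. exp (t * (Wf \<T> x)\<^sup>2)) \<le> \<sigma>\<^sup>2 * t\<^sup>2 / 2 *
      measure_pmf.expectation \<mu> (\<lambda>x. exp (t * (Wf \<T> x)\<^sup>2) * Gam \<mu> (\<lambda>y. (Wf \<T> y)\<^sup>2) x)"
    using engine[OF fin lsi, of t "\<lambda>y. (Wf \<T> y)\<^sup>2"] t by simp
  also have "measure_pmf.expectation \<mu> (\<lambda>x. exp (t * (Wf \<T> x)\<^sup>2) * Gam \<mu> (\<lambda>y. (Wf \<T> y)\<^sup>2) x) \<le>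
      measure_pmf.expectation \<mu> (\<lambda>x. (4 * ((b - a)\<^sup>2 * (T2 \<T>)\<^sup>2)) * ((Wf \<T> x)\<^sup>2 * exp (t * (Wf \<T> x)\<^sup>2)))"
  proof (rule E_mono[OF fin])
    fix x assume x: "x \<in> set_pmf \<mu>"
    have "exp (t * (Wf \<T> x)\<^sup>2) * Gam \<mu> (\<lambda>y. (Wf \<T> y)\<^sup>2) x \<le>
        exp (t * (Wf \<T> x)\<^sup>2) * (4 * (Wf \<T> x)\<^sup>2 * ((b - a)\<^sup>2 * (T2 \<T>)\<^sup>2))"
      by (intro mult_left_mono gradW2[OF x]) auto
    thus "exp (t * (Wf \<T> x)\<^sup>2) * Gam \<mu> (\<lambda>y. (Wf \<T> y)\<^sup>2) x \<le>
        (4 * ((b - a)\<^sup>2 * (T2 \<T>)\<^sup>2)) * ((Wf \<T> x)\<^sup>2 * exp (t * (Wf \<T> x)\<^sup>2))" by (simp add: mult_ac)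
  qed
  also have "\<dots> = (4 * ((b - a)\<^sup>2 * (T2 \<T>)\<^sup>2)) * MGD \<mu> (\<lambda>y. (Wf \<T> y)\<^sup>2) t"
    unfolding MGD_def by (rule E_cmult[OF fin])
  finally have "ent \<mu> (\<lambda>x. exp (t * (Wf \<T> x)\<^sup>2)) \<le> \<sigma>\<^sup>2 * t\<^sup>2 / 2 * ((4 * ((b - a)\<^sup>2 * (T2 \<T>)\<^sup>2)) * MGD \<mu> (\<lambda>y. (Wf \<T> y)\<^sup>2) t)"
    by (simp add: mult_left_mono)
  thus "ent \<mu> (\<lambda>x. exp (t * (Wf \<T> x)\<^sup>2)) \<le> 2 * (cc * (T2 \<T>)\<^sup>2) * t\<^sup>2 * MGD \<mu> (\<lambda>y. (Wf \<T> y)\<^sup>2) t"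
    by (simp add: algebra_simps)
qed

end

lemma final_arith:
  fixes A B c t E :: real
  assumes c: "0 < c" and A: "0 < A" and B: "0 < B" and t: "0 < t" and E: "1/2 < E"
    and E1: "E \<le> t\<^sup>2 / A\<^sup>2 / (60 * c)" and E2: "E \<le> t / B / (60 * c)"
  shows "\<exists>l. 0 < l \<and> l \<le> 1 / (2 * c * B) \<and> - l * t + (4 * c * A\<^sup>2 + 24 * c\<^sup>2 * B\<^sup>2) * l\<^sup>2 \<le> - E"
proof -
  define C where "C = 4 * c * A\<^sup>2 + 24 * c\<^sup>2 * B\<^sup>2"
  have C: "0 < C" unfolding C_def using c A B by (simp add: add_pos_pos)
  define l0 where "l0 = 1 / (2 * c * B)"
  have l0: "0 < l0" unfolding l0_def using c B by simp
  have E2': "E \<le> t / (60 * c * B)" using E2 by (simp add: field_simps)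
  have E1': "E \<le> t\<^sup>2 / (60 * c * A\<^sup>2)" using E1 by (simp add: field_simps)
  show ?thesis
  proof (cases "t / (2 * C) \<le> l0")
    case True
    define l where "l = t / (2 * C)"
    have l: "0 < l" unfolding l_def using t C by simp
    have val: "- l * t + C * l\<^sup>2 = - (t\<^sup>2 / (4 * C))"
      unfolding l_def using C by (simp add: field_simps power2_eq_square)
    have main: "E \<le> t\<^sup>2 / (4 * C)"
    proof (cases "6 * c * B\<^sup>2 \<le> A\<^sup>2")
      case True
      have "24 * c\<^sup>2 * B\<^sup>2 = 4 * c * (6 * c * B\<^sup>2)" by (simp add: power2_eq_square)
      also have "\<dots> \<le> 4 * c * A\<^sup>2" using True c by (intro mult_left_mono) auto
      finally have "C \<le> 8 * c * A\<^sup>2" unfolding C_def by simp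
      hence "t\<^sup>2 / (4 * (8 * c * A\<^sup>2)) \<le> t\<^sup>2 / (4 * C)" using C by (intro divide_left_mono) auto
      moreover have "t\<^sup>2 / (60 * c * A\<^sup>2) \<le> t\<^sup>2 / (4 * (8 * c * A\<^sup>2))"
        using c A by (intro divide_left_mono) auto
      ultimately show ?thesis using E1' by linarith
    next
      case False
      hence "4 * c * A\<^sup>2 \<le> 4 * c * (6 * c * B\<^sup>2)" using c by (intro mult_left_mono) auto
      hence "C \<le> 48 * c\<^sup>2 * B\<^sup>2" unfolding C_def by (simp add: power2_eq_square)
      hence h1: "t\<^sup>2 / (4 * (48 * c\<^sup>2 * B\<^sup>2)) \<le> t\<^sup>2 / (4 * C)"
        by (intro divide_left_mono) (use C c B in \<open>auto simp: mult_ac\<close>)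
      have "1/2 < t / (60 * c * B)" using E E2' by linarith
      hence tb: "30 * c * B < t" using c B by (simp add: field_simps)
      have "t / (60 * c * B) \<le> t\<^sup>2 / (4 * (48 * c\<^sup>2 * B\<^sup>2))"
      proof -
        have "t / (60 * c * B) = t * (4 * c * B) / (240 * c\<^sup>2 * B\<^sup>2)" using c B by (simp add: field_simps power2_eq_square)
        also have "\<dots> \<le> t * t / (240 * c\<^sup>2 * B\<^sup>2)"
          using tb c B t by (intro divide_right_mono mult_left_mono) auto
        also have "\<dots> \<le> t * t / (192 * c\<^sup>2 * B\<^sup>2)"
          by (rule divide_left_mono) (use c B in auto)
        also have "\<dots> = t\<^sup>2 / (4 * (48 * c\<^sup>2 * B\<^sup>2))" by (simp add: power2_eq_square)
        finally show ?thesis .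
      qed
      thus ?thesis using h1 E2' by linarith
    qed
    show ?thesis
      by (rule exI[of _ l]) (use l True val main in \<open>auto simp: l_def l0_def C_def\<close>)
  next
    case False
    have Cl: "C * l0 < t / 2" using False C by (simp add: field_simps)
    have "- l0 * t + C * l0\<^sup>2 = l0 * (C * l0 - t)" by (simp add: power2_eq_square algebra_simps)
    also have "\<dots> \<le> l0 * (- t / 2)" using Cl l0 by (intro mult_left_mono) auto
    also have "\<dots> = - (t / (4 * c * B))" unfolding l0_def using c B by (simp add: field_simps)
    also have "\<dots> \<le> - (t / (60 * c * B))" using c B t by (simp add: divide_left_mono)
    also have "\<dots> \<le> - E" using E2' by simp
    finally have fin: "- l0 * t + C * l0\<^sup>2 \<le> - E" .
    hence fin': "- l0 * t + (4 * c * A\<^sup>2 + 24 * c\<^sup>2 * B\<^sup>2) * l0\<^sup>2 \<le> - E" unfolding C_def .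
    have l0le: "l0 \<le> 1 / (2 * c * B)" unfolding l0_def by simp
    show ?thesis using l0 l0le fin' by blast
  qed
qed

context conc
begin

lemma chernoff:
  fixes F :: "(real,'n) vec \<Rightarrow> real"
  assumes l: "0 \<le> l"
  shows "measure_pmf.prob \<mu> {x. t \<le> F x - measure_pmf.expectation \<mu> F} \<le>
    exp (- l * t - l * measure_pmf.expectation \<mu> F) * MGF \<mu> F l"
proof -
  define m where "m = measure_pmf.expectation \<mu> F"
  define A where "A = {x. t \<le> F x - m}"
  have "measure_pmf.prob \<mu> A = measure_pmf.prob \<mu> (A \<inter> set_pmf \<mu>)"
    by (simp add: measure_Int_set_pmf)
  also have "\<dots> = (\<Sum>x\<in>A \<inter> set_pmf \<mu>. pmf \<mu> x)"
    by (rule measure_measure_pmf_finite) (use fin in simp)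
  also have "\<dots> \<le> (\<Sum>x\<in>A \<inter> set_pmf \<mu>. pmf \<mu> x * exp (l * (F x - m - t)))"
  proof (rule sum_mono)
    fix x assume "x \<in> A \<inter> set_pmf \<mu>"
    hence "0 \<le> l * (F x - m - t)" using l unfolding A_def by simp
    hence "1 \<le> exp (l * (F x - m - t))" by simp
    thus "pmf \<mu> x \<le> pmf \<mu> x * exp (l * (F x - m - t))"
      using mult_left_mono[of 1 "exp (l * (F x - m - t))" "pmf \<mu> x"] by simp
  qed
  also have "\<dots> \<le> (\<Sum>x\<in>set_pmf \<mu>. pmf \<mu> x * exp (l * (F x - m - t)))"
    by (rule sum_mono2) (use fin in auto)
  also have "\<dots> = measure_pmf.expectation \<mu> (\<lambda>x. exp (l * (F x - m - t)))"
    by (rule E_sum[OF fin, symmetric])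
  also have "\<dots> = measure_pmf.expectation \<mu> (\<lambda>x. exp (- l * t - l * m) * exp (l * F x))"
    by (intro E_cong[OF fin]) (simp add: exp_add[symmetric] algebra_simps)
  also have "\<dots> = exp (- l * t - l * m) * MGF \<mu> F l"
    unfolding MGF_def by (rule E_cmult[OF fin])
  finally show ?thesis unfolding A_def m_def .
qed

end

lemma div_aux: "0 \<le> (x::real) \<Longrightarrow> 1/2 \<le> d \<Longrightarrow> x / d \<le> 2 * x"
proof -
  assume x: "0 \<le> x" and d: "1/2 \<le> d"
  have "x / d \<le> x / (1/2)" using x d by (intro divide_left_mono) auto
  thus ?thesis by simp
qed

lemma half_aux: "0 < (x::real) \<Longrightarrow> x * (1 / (2 * x)) = 1/2" by simp

context conc
begin

lemma f_ent:
  assumes c: "0 < cc" and B: "0 < T2 \<T>" and l: "0 < l" "l \<le> 1 / (2 * cc * T2 \<T>)"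
  shows "ent \<mu> (\<lambda>x. exp (l * fT \<T> x)) \<le> (4 * cc * (T1 \<mu> \<T>)\<^sup>2 + 24 * cc\<^sup>2 * (T2 \<T>)\<^sup>2) * l\<^sup>2 * MGF \<mu> (fT \<T>) l"
proof -
  define Z where "Z = MGF \<mu> (fT \<T>) l"
  have Z: "0 < Z" unfolding Z_def by (rule MGF_pos[OF fin])
  define \<theta> where "\<theta> = cc * l\<^sup>2"
  have th: "0 < \<theta>" unfolding \<theta>_def using c l by simp
  define W2 where "W2 y = (Wf \<T> y)\<^sup>2" for y
  define Lg where "Lg = ln (MGF \<mu> W2 \<theta>)"
  define Q where "Q = measure_pmf.expectation \<mu> (\<lambda>x. W2 x * exp (l * fT \<T> x))"
  define En where "En = ent \<mu> (\<lambda>x. exp (l * fT \<T> x))"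
  have e1: "En \<le> \<theta> / 2 * Q"
  proof -
    have "En \<le> \<sigma>\<^sup>2 * l\<^sup>2 / 2 * measure_pmf.expectation \<mu> (\<lambda>x. exp (l * fT \<T> x) * Gam \<mu> (fT \<T>) x)"
      unfolding En_def using engine[OF fin lsi, of l "fT \<T>"] l by simp
    also have "measure_pmf.expectation \<mu> (\<lambda>x. exp (l * fT \<T> x) * Gam \<mu> (fT \<T>) x) \<le>
        measure_pmf.expectation \<mu> (\<lambda>x. (b - a)\<^sup>2 * (W2 x * exp (l * fT \<T> x)))"
    proof (rule E_mono[OF fin])
      fix x assume x: "x \<in> set_pmf \<mu>"
      have "exp (l * fT \<T> x) * Gam \<mu> (fT \<T>) x \<le> exp (l * fT \<T> x) * ((b - a)\<^sup>2 * (Wf \<T> x)\<^sup>2)"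
        by (rule mult_left_mono[OF gradf[OF x]]) simp
      thus "exp (l * fT \<T> x) * Gam \<mu> (fT \<T>) x \<le> (b - a)\<^sup>2 * (W2 x * exp (l * fT \<T> x))"
        unfolding W2_def by (simp add: mult_ac)
    qed
    also have "\<dots> = (b - a)\<^sup>2 * Q" unfolding Q_def by (rule E_cmult[OF fin])
    finally have "En \<le> \<sigma>\<^sup>2 * l\<^sup>2 / 2 * ((b - a)\<^sup>2 * Q)" by (simp add: mult_left_mono)
    thus ?thesis unfolding \<theta>_def by (simp add: algebra_simps)
  qed
  have e2: "\<theta> * Q \<le> En + Z * Lg"
  proof -
    have "measure_pmf.expectation \<mu> (\<lambda>x. (\<theta> * W2 x) * exp (l * fT \<T> x)) \<le>
        En + measure_pmf.expectation \<mu> (\<lambda>x. exp (l * fT \<T> x)) * ln (measure_pmf.expectation \<mu> (\<lambda>x. exp (\<theta> * W2 x)))"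
      unfolding En_def by (rule young[OF fin]) simp
    moreover have "measure_pmf.expectation \<mu> (\<lambda>x. (\<theta> * W2 x) * exp (l * fT \<T> x)) = \<theta> * Q"
      unfolding Q_def by (simp add: mult.assoc E_cmult[OF fin])
    ultimately show ?thesis unfolding Z_def Lg_def MGF_def by simp
  qed
  have EnZ: "En \<le> Z * Lg" using e1 e2 by simp
  have ctl: "cc * T2 \<T> * l \<le> 1/2"
  proof -
    have "cc * T2 \<T> * l \<le> cc * T2 \<T> * (1 / (2 * cc * T2 \<T>))" using l c B by (intro mult_left_mono) auto
    also have "\<dots> = 1/2"
    proof -
      have x: "0 < cc * T2 \<T>" using c B by (rule mult_pos_pos)
      have "2 * cc * T2 \<T> = 2 * (cc * T2 \<T>)" by (simp only: mult.assoc)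
      hence "cc * T2 \<T> * (1 / (2 * cc * T2 \<T>)) = (cc * T2 \<T>) * (1 / (2 * (cc * T2 \<T>)))" by (simp only:)
      also have "\<dots> = 1/2" by (rule half_aux[OF x])
      finally show ?thesis .
    qed
    finally show ?thesis .
  qed
  have ath: "2 * (cc * (T2 \<T>)\<^sup>2) * \<theta> \<le> 1/2"
  proof -
    have "2 * (cc * (T2 \<T>)\<^sup>2) * \<theta> = 2 * (cc * T2 \<T> * l)\<^sup>2" unfolding \<theta>_def by (simp add: power2_eq_square)
    also have "\<dots> \<le> 2 * (1/2)\<^sup>2" using ctl c B l by (intro mult_left_mono power_mono) auto
    also have "(2::real) * (1/2)\<^sup>2 = 1/2" by (simp add: power2_eq_square)
    finally show ?thesis .
  qed
  have pos: "0 < cc * (T2 \<T>)\<^sup>2" using c B by simp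
  have th2: "\<theta> < 1 / (2 * (cc * (T2 \<T>)\<^sup>2))" using ath pos by (simp add: field_simps)
  have EW2: "0 \<le> measure_pmf.expectation \<mu> W2" unfolding W2_def by (rule E_nonneg[OF fin]) simp
  have "Lg \<le> \<theta> * measure_pmf.expectation \<mu> W2 / (1 - 2 * (cc * (T2 \<T>)\<^sup>2) * \<theta>)"
    unfolding Lg_def W2_def by (rule W2_mgf[OF pos th th2])
  also have "\<dots> \<le> 2 * (\<theta> * measure_pmf.expectation \<mu> W2)"
  proof -
    have n: "0 \<le> \<theta> * measure_pmf.expectation \<mu> W2" using th EW2 by simp
    have "1/2 \<le> 1 - 2 * (cc * (T2 \<T>)\<^sup>2) * \<theta>" using ath by linarith
    thus ?thesis by (rule div_aux[OF n])
  qed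
  also have "\<dots> \<le> 2 * (\<theta> * (2 * (T1 \<mu> \<T>)\<^sup>2 + 12 * (cc * (T2 \<T>)\<^sup>2)))"
    using W2_bound[OF pos] th unfolding W2_def by (intro mult_left_mono) auto
  also have "\<dots> = (4 * cc * (T1 \<mu> \<T>)\<^sup>2 + 24 * cc\<^sup>2 * (T2 \<T>)\<^sup>2) * l\<^sup>2"
    unfolding \<theta>_def by (simp add: power2_eq_square algebra_simps)
  finally have "Lg \<le> (4 * cc * (T1 \<mu> \<T>)\<^sup>2 + 24 * cc\<^sup>2 * (T2 \<T>)\<^sup>2) * l\<^sup>2" .
  hence "Z * Lg \<le> Z * ((4 * cc * (T1 \<mu> \<T>)\<^sup>2 + 24 * cc\<^sup>2 * (T2 \<T>)\<^sup>2) * l\<^sup>2)" using Z by (intro mult_left_mono) auto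
  thus ?thesis using EnZ unfolding En_def Z_def by (simp add: mult_ac)
qed

lemma f_mgf:
  assumes c: "0 < cc" and B: "0 < T2 \<T>" and l: "0 < l" "l \<le> 1 / (2 * cc * T2 \<T>)"
  shows "ln (MGF \<mu> (fT \<T>) l) \<le> l * measure_pmf.expectation \<mu> (fT \<T>) + (4 * cc * (T1 \<mu> \<T>)\<^sup>2 + 24 * cc\<^sup>2 * (T2 \<T>)\<^sup>2) * l\<^sup>2"
proof (rule herbst1[OF fin _ l])
  fix s :: real assume "0 < s" "s \<le> 1 / (2 * cc * T2 \<T>)"
  thus "ent \<mu> (\<lambda>x. exp (s * fT \<T> x)) \<le> (4 * cc * (T1 \<mu> \<T>)\<^sup>2 + 24 * cc\<^sup>2 * (T2 \<T>)\<^sup>2) * s\<^sup>2 * MGF \<mu> (fT \<T>) s"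
    by (intro f_ent[OF c B])
qed

theorem conc_main:
  assumes t: "0 \<le> t"
  shows "measure_pmf.prob \<mu> {x. fT \<T> x - measure_pmf.expectation \<mu> (fT \<T>) \<ge> t}
    \<le> 2 * exp (- (1 / (60 * (b - a)\<^sup>2 * \<sigma>\<^sup>2)) * min (t\<^sup>2 / (T1 \<mu> \<T>)\<^sup>2) (t / T2 \<T>))"
proof -
  define m where "m = min (t\<^sup>2 / (T1 \<mu> \<T>)\<^sup>2) (t / T2 \<T>)"
  define Es where "Es = (1 / (60 * cc)) * m"
  have rhs: "- (1 / (60 * (b - a)\<^sup>2 * \<sigma>\<^sup>2)) * m = - Es" unfolding Es_def by (simp add: mult.assoc)
  define P where "P = measure_pmf.prob \<mu> {x. fT \<T> x - measure_pmf.expectation \<mu> (fT \<T>) \<ge> t}"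
  have "P \<le> 2 * exp (- Es)"
  proof (cases "Es \<le> 1/2")
    case True
    have "P \<le> 1" unfolding P_def by (rule measure_pmf.prob_le_1)
    also have "1 < 2 * exp (- (1/2 :: real))"
      using exp_half_lt_2 by (simp add: exp_minus field_simps)
    also have "exp (- (1/2 :: real)) \<le> exp (- Es)" using True by simp
    finally show ?thesis by simp
  next
    case False
    hence Es: "1/2 < Es" by simp
    have T1n: "0 \<le> T1 \<mu> \<T>" by (rule T1_nonneg)
    have T2n: "0 \<le> T2 \<T>" by (rule T2_nonneg)
    have m_le1: "m \<le> t\<^sup>2 / (T1 \<mu> \<T>)\<^sup>2" and m_le2: "m \<le> t / T2 \<T>" unfolding m_def by auto
    have cpos: "0 < cc"
    proof (rule ccontr)
      assume "\<not> 0 < cc"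
      hence "cc = 0" using cc_nonneg by linarith
      hence "Es = 0" unfolding Es_def by simp
      thus False using Es by simp
    qed
    have mpos: "0 < m"
    proof -
      have k: "0 < 1 / (60 * cc)" using cpos by simp
      have "0 < Es" using Es by simp
      hence "0 < (1 / (60 * cc)) * m" unfolding Es_def .
      thus ?thesis using zero_less_mult_pos[OF _ k] by blast
    qed
    have T1p: "0 < T1 \<mu> \<T>"
    proof (rule ccontr)
      assume "\<not> 0 < T1 \<mu> \<T>"
      hence "T1 \<mu> \<T> = 0" using T1n by linarith
      thus False using m_le1 mpos by simp
    qed
    have T2p: "0 < T2 \<T>"
    proof (rule ccontr)
      assume "\<not> 0 < T2 \<T>"
      hence "T2 \<T> = 0" using T2n by linarith
      thus False using m_le2 mpos by simp
    qed
    have tp: "0 < t"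
    proof (rule ccontr)
      assume "\<not> 0 < t"
      hence "t = 0" using t by linarith
      thus False using m_le2 mpos by simp
    qed
    have k: "0 \<le> 1 / (60 * cc)" using cpos by simp
    have E1: "Es \<le> t\<^sup>2 / (T1 \<mu> \<T>)\<^sup>2 / (60 * cc)"
    proof -
      have "Es \<le> (1 / (60 * cc)) * (t\<^sup>2 / (T1 \<mu> \<T>)\<^sup>2)" unfolding Es_def by (rule mult_left_mono[OF m_le1 k])
      thus ?thesis by (simp add: mult_ac)
    qed
    have E2: "Es \<le> t / T2 \<T> / (60 * cc)"
    proof -
      have "Es \<le> (1 / (60 * cc)) * (t / T2 \<T>)" unfolding Es_def by (rule mult_left_mono[OF m_le2 k])
      thus ?thesis by (simp add: mult_ac)
    qed
    obtain l where l: "0 < l" "l \<le> 1 / (2 * cc * T2 \<T>)"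
      and lb: "- l * t + (4 * cc * (T1 \<mu> \<T>)\<^sup>2 + 24 * cc\<^sup>2 * (T2 \<T>)\<^sup>2) * l\<^sup>2 \<le> - Es"
      using final_arith[OF cpos T1p T2p tp Es E1 E2] by blast
    define C0 where "C0 = 4 * cc * (T1 \<mu> \<T>)\<^sup>2 + 24 * cc\<^sup>2 * (T2 \<T>)\<^sup>2"
    define Ef where "Ef = measure_pmf.expectation \<mu> (fT \<T>)"
    have "P \<le> exp (- l * t - l * Ef) * MGF \<mu> (fT \<T>) l"
      unfolding P_def Ef_def using chernoff[where l=l and F="fT \<T>" and t=t] l by simp
    also have "MGF \<mu> (fT \<T>) l \<le> exp (l * Ef + C0 * l\<^sup>2)"
    proof -
      have "MGF \<mu> (fT \<T>) l = exp (ln (MGF \<mu> (fT \<T>) l))" using MGF_pos[OF fin] by simp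
      also have "\<dots> \<le> exp (l * Ef + C0 * l\<^sup>2)" using f_mgf[OF cpos T2p l] unfolding Ef_def C0_def by simp
      finally show ?thesis .
    qed
    hence "exp (- l * t - l * Ef) * MGF \<mu> (fT \<T>) l \<le> exp (- l * t - l * Ef) * exp (l * Ef + C0 * l\<^sup>2)"
      by (intro mult_left_mono) auto
    also have "\<dots> = exp (- l * t + C0 * l\<^sup>2)" by (simp add: exp_add[symmetric])
    also have "\<dots> \<le> exp (- Es)" using lb unfolding C0_def by simp
    also have "\<dots> \<le> 2 * exp (- Es)" by simp
    finally show ?thesis .
  qed
  thus ?thesis unfolding P_def m_def[symmetric] rhs .
qed

end

lemma fin_vecs:
  fixes S :: "(real,'n::finite) vec set"
  assumes "\<And>i. finite ((\<lambda>x. x $ i) ` S)"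
  shows "finite S"
proof -
  define V where "V i = (\<lambda>x. x $ i) ` S" for i
  have "S \<subseteq> vec_lambda ` (PiE UNIV V)"
  proof
    fix x assume x: "x \<in> S"
    have "(\<lambda>i. x $ i) \<in> PiE UNIV V" unfolding V_def using x by auto
    moreover have "x = vec_lambda (\<lambda>i. x $ i)" by simp
    ultimately show "x \<in> vec_lambda ` (PiE UNIV V)" by blast
  qed
  moreover have "finite (PiE UNIV V)" by (rule finite_PiE) (use assms in \<open>auto simp: V_def\<close>)
  ultimately show ?thesis by (meson finite_imageI finite_subset)
qed

lemma compact_bound:
  fixes \<T> :: "('n::finite \<Rightarrow> 'n \<Rightarrow> 'b::real_normed_vector) set"
  assumes "compact \<T>"
  shows "\<exists>M. \<forall>t\<in>\<T>. \<forall>i j. norm (t i j) \<le> M"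
proof -
  have "\<exists>B. \<forall>t\<in>\<T>. norm (t i j) \<le> B" for i j
  proof -
    have c: "continuous_on UNIV (\<lambda>t::'n \<Rightarrow> 'n \<Rightarrow> 'b. t i j)"
      by (rule continuous_on_product_then_coordinatewise[OF continuous_on_product_coordinates])
    have "compact ((\<lambda>t. t i j) ` \<T>)"
      by (rule compact_continuous_image[OF continuous_on_subset[OF c] assms]) simp
    hence "bounded ((\<lambda>t. t i j) ` \<T>)" by (rule compact_imp_bounded)
    then obtain B where "\<forall>y\<in>(\<lambda>t. t i j) ` \<T>. norm y \<le> B" unfolding bounded_iff by blast
    thus ?thesis by blast
  qed
  then obtain B where B: "\<And>i j t. t \<in> \<T> \<Longrightarrow> norm (t i j) \<le> B i j" by metis
  define M where "M = (\<Sum>i\<in>UNIV. \<Sum>j\<in>UNIV. \<bar>B i j\<bar>)"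
  have "\<bar>B i j\<bar> \<le> M" for i j
  proof -
    have "\<bar>B i j\<bar> \<le> (\<Sum>j\<in>UNIV. \<bar>B i j\<bar>)" by (rule member_le_sum) auto
    also have "\<dots> \<le> M" unfolding M_def by (rule member_le_sum[of i UNIV "\<lambda>i. \<Sum>j\<in>UNIV. \<bar>B i j\<bar>"]) (auto intro: sum_nonneg)
    finally show ?thesis .
  qed
  hence "\<forall>t\<in>\<T>. \<forall>i j. norm (t i j) \<le> M" using B by (meson abs_ge_self order_trans)
  thus ?thesis by blast
qed

theorem corollary2p2:
  fixes \<mu> :: "((real, 'n::{finite,linorder}) vec) pmf"
    and a b \<sigma> t :: real
    and \<T> :: "('n \<Rightarrow> 'n \<Rightarrow> 'b::banach) set"
  assumes "a < b"
    and "\<forall>i. finite ((\<lambda>x. x $ i) ` set_pmf \<mu>)"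
    and "\<forall>i. (\<lambda>x. x $ i) ` set_pmf \<mu> \<subseteq> {a..b}"
    and "d_LSI \<mu> \<sigma>"
    and "compact \<T>" and "\<T> \<noteq> {}"
    and "t \<ge> 0"
  shows "measure_pmf.prob \<mu> {x. fT \<T> x - measure_pmf.expectation \<mu> (fT \<T>) \<ge> t}
    \<le> 2 * exp (- (1 / (60 * (b - a)\<^sup>2 * \<sigma>\<^sup>2)) * min (t\<^sup>2 / (T1 \<mu> \<T>)\<^sup>2) (t / T2 \<T>))"
proof -
  have fin: "finite (set_pmf \<mu>)" by (rule fin_vecs) (use assms(2) in blast)
  obtain M where M: "\<forall>t\<in>\<T>. \<forall>i j. norm (t i j) \<le> M" using compact_bound[OF assms(5)] by blast
  interpret conc \<mu> \<T> a b \<sigma> M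
  proof
    show "finite (set_pmf \<mu>)" by (rule fin)
    show "\<And>x i. x \<in> set_pmf \<mu> \<Longrightarrow> x $ i \<in> {a..b}" using assms(3) by blast
    show "a < b" by (rule assms(1))
    show "d_LSI \<mu> \<sigma>" by (rule assms(4))
    show "\<T> \<noteq> {}" by (rule assms(6))
    show "\<And>t i j. t \<in> \<T> \<Longrightarrow> norm (t i j) \<le> M" using M by blast
  qed
  show ?thesis by (rule conc_main[OF assms(7)])
qed

end
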